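(* Let $\mathcal C$ be a depth-$\Delta$ Clifford circuit on $n$ qubits with linear outcome code $\mathcal O(\mathcal C)$. The group of all operators in $\overline{\mathcal P}_{n(\Delta+1)}$ that commute with every $\overleftarrow{F(u)}$, $u\in\mathcal O(\mathcal C)^\perp$ (the stabilizers and logical operators of the spacetime code), is generated by: (i) the operators $\eta_{\Delta+0.5}(P)$, $P$ ranging over a basis of $\overline{\mathcal P}_n$; (ii) for each $\ell=1,\dots,\Delta$, the operators $G(P,\ell)$, $P$ ranging over a basis of the space of Pauli operators in $\overline{\mathcal P}_n$ commuting with all operators measured at level $\ell$; (iii) the operators $L(v)$, $v$ ranging over a basis of $\mathcal O(\mathcal C)$.
   Context: A Clifford circuit on $n$ qubits is a finite sequence of operations, each a unitary Clifford gate or the measurement of a Hermitian $n$-qubit Pauli, each with a level in $\{1,2,\dots\}$; operations of equal level have disjoint supports and levels are nondecreasing; depth $\Delta$ = maximal level. In circuit order the $j$-th measurement measures $S_j$ at level $\ell_j$ ($j=1,\dots,m$); outcome $o_j=0$ for eigenvalue $+1$, $1$ for $-1$. The outcome code $\mathcal O(\mathcal C)\subseteq\mathbb Z_2^m$ is the set of outcome bit-strings occurring with nonzero probability for some input state; $\perp$ refers to $(u|v)=\sum u_iv_i\bmod2$. $\overline{\mathcal P}_N$ is the $N$-qubit Pauli group modulo phases. $U_\ell$ is the product of the unitary gates of level $\ell$ (identity if none). Fault operators $F\in\overline{\mathcal P}_{n(\Delta+1)}$ act on qubits $(\ell+0.5,q)$, $0\le\ell\le\Delta$, $1\le q\le n$,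 with level components $F_{\ell+0.5}$; $\eta_{\ell+0.5}(P)$ is $P$ at level $\ell+0.5$ and $I$ elsewhere. Back-cumulant $\overleftarrow F$: start with $F$; for $\ell=\Delta,\dots,1$ replace $\overleftarrow F_{\ell-0.5}$ by $\overleftarrow F_{\ell-0.5}\cdot U_\ell^{-1}\overleftarrow F_{\ell+0.5}U_\ell$. $F(u)=\prod_j\eta_{\ell_j-0.5}(S_j^{u_j})$. For $1\le\ell\le\Delta$ and $P\in\overline{\mathcal P}_n$, $G(P,\ell)=\eta_{\ell-0.5}(P)\,\eta_{\ell+0.5}(U_\ell PU_\ell^{-1})$. For each $j$, fix a Pauli operator $P_j\in\overline{\mathcal P}_n$ supported within the support of $S_j$ and anticommuting with $S_j$; for $v\in\mathbb Z_2^m$, $L(v)=\prod_{j=1}^m G(P_j,\ell_j)^{v_j}$. *)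

theory Defs
  imports "Jordan_Normal_Form.Matrix"
begin

text \<open>An element of the n-qubit Pauli group modulo phases is stored as a map
  qubit index to its (x,z) bits: (False,False)=I, (True,False)=X, (False,True)=Z,
  (True,True)=Y.  Qubits are 0,...,n-1; the element is required to be I on qubits >= n.\<close>

type_synonym pv = "nat \<Rightarrow> bool \<times> bool"

definition pv_valid :: "nat \<Rightarrow> pv \<Rightarrow> bool" where
  "pv_valid n p \<longleftrightarrow> (\<forall>q\<ge>n. p q = (False, False))"

definition pv_one :: pv where
  "pv_one = (\<lambda>_. (False, False))"

definition pv_mult :: "pv \<Rightarrow> pv \<Rightarrow> pv" where
  "pv_mult p r = (\<lambda>q. (fst (p q) \<noteq> fst (r q), snd (p q) \<noteq> snd (r q)))"

definition pv_supp :: "pv \<Rightarrow> nat set" where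
  "pv_supp p = {q. p q \<noteq> (False, False)}"

definition pv_anticomm_at :: "pv \<Rightarrow> pv \<Rightarrow> nat \<Rightarrow> bool" where
  "pv_anticomm_at p r q \<longleftrightarrow> ((fst (p q) \<and> snd (r q)) \<noteq> (snd (p q) \<and> fst (r q)))"

definition pv_commute :: "nat \<Rightarrow> pv \<Rightarrow> pv \<Rightarrow> bool" where
  "pv_commute n p r \<longleftrightarrow> even (card {q. q < n \<and> pv_anticomm_at p r q})"

text \<open>Single-qubit Pauli matrices I, X, Z, Y; basis index False = |0>, True = |1>.\<close>
definition sigma :: "bool \<times> bool \<Rightarrow> bool \<Rightarrow> bool \<Rightarrow> complex" where
  "sigma xz a b =
     (if xz = (False, False) then (if a = b then 1 else 0)
      else if xz = (True, False) then (if a \<noteq> b then 1 else 0)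
      else if xz = (False, True) then (if a = b then (if a then -1 else 1) else 0)
      else (if a \<noteq> b then (if a then \<i> else - \<i>) else 0))"

text \<open>The tensor-product Pauli matrix on n qubits (qubit q = bit q of the basis index).\<close>
definition pmat :: "nat \<Rightarrow> pv \<Rightarrow> complex mat" where
  "pmat n p = mat (2 ^ n) (2 ^ n) (\<lambda>(i, j). \<Prod>q<n. sigma (p q) (bit i q) (bit j q))"

definition adj :: "complex mat \<Rightarrow> complex mat" where
  "adj M = mat (dim_col M) (dim_row M) (\<lambda>(i, j). cnj (M $$ (j, i)))"

definition unitary_n :: "nat \<Rightarrow> complex mat \<Rightarrow> bool" where
  "unitary_n n U \<longleftrightarrow> U \<in> carrier_mat (2 ^ n) (2 ^ n) \<and> adj U * U = 1\<^sub>m (2 ^ n)"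

definition clifford_n :: "nat \<Rightarrow> complex mat \<Rightarrow> bool" where
  "clifford_n n U \<longleftrightarrow> (\<forall>p. pv_valid n p \<longrightarrow>
      (\<exists>c r. pv_valid n r \<and> U * pmat n p * adj U = c \<cdot>\<^sub>m pmat n r))"

definition agree_on :: "nat set \<Rightarrow> nat \<Rightarrow> nat \<Rightarrow> bool" where
  "agree_on S i j \<longleftrightarrow> (\<forall>q\<in>S. bit i q = bit j q)"

text \<open>U = V \<otimes> identity on the qubits outside A (entrywise description of the tensor product).\<close>
definition acts_within :: "nat \<Rightarrow> nat set \<Rightarrow> complex mat \<Rightarrow> bool" where
  "acts_within n A U \<longleftrightarrow>
     (\<forall>i<2^n. \<forall>j<2^n. \<not> agree_on ({..<n} - A) i j \<longrightarrow> U $$ (i, j) = 0) \<and>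
     (\<forall>i<2^n. \<forall>j<2^n. \<forall>i'<2^n. \<forall>j'<2^n.
        agree_on A i i' \<and> agree_on A j j' \<and> agree_on ({..<n} - A) i j \<and> agree_on ({..<n} - A) i' j'
        \<longrightarrow> U $$ (i, j) = U $$ (i', j'))"

text \<open>U P U^{-1} modulo phases (U unitary, so U^{-1} = adj U).\<close>
definition conj_pv :: "nat \<Rightarrow> complex mat \<Rightarrow> pv \<Rightarrow> pv" where
  "conj_pv n U p = (THE r. pv_valid n r \<and> (\<exists>c. U * pmat n p * adj U = c \<cdot>\<^sub>m pmat n r))"

text \<open>Gate A U l: unitary U acting within support A at level l.
  Meas s p l: measurement at level l of the Hermitian Pauli (-1)^s * pmat p.\<close>
datatype cop = Gate "nat set" "complex mat" nat | Meas bool pv nat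

fun op_level :: "cop \<Rightarrow> nat" where
  "op_level (Gate A U l) = l"
| "op_level (Meas s p l) = l"

fun op_supp :: "cop \<Rightarrow> nat set" where
  "op_supp (Gate A U l) = A"
| "op_supp (Meas s p l) = pv_supp p"

fun op_valid :: "nat \<Rightarrow> cop \<Rightarrow> bool" where
  "op_valid n (Gate A U l) \<longleftrightarrow> A \<subseteq> {..<n} \<and> unitary_n n U \<and> clifford_n n U \<and> acts_within n A U"
| "op_valid n (Meas s p l) \<longleftrightarrow> pv_valid n p"

definition clifford_circuit :: "nat \<Rightarrow> cop list \<Rightarrow> bool" where
  "clifford_circuit n C \<longleftrightarrow>
     (\<forall>x\<in>set C. op_valid n x \<and> 1 \<le> op_level x) \<and>
     sorted (map op_level C) \<and>
     (\<forall>i<length C. \<forall>k<length C. i \<noteq> k \<and> op_level (C ! i) = op_level (C ! k)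
        \<longrightarrow> op_supp (C ! i) \<inter> op_supp (C ! k) = {})"

definition depth :: "cop list \<Rightarrow> nat" where
  "depth C = Max (insert 0 (op_level ` set C))"

text \<open>The measurements in circuit order: (sign, Pauli mod phase, level).\<close>
fun meas_list :: "cop list \<Rightarrow> (bool \<times> pv \<times> nat) list" where
  "meas_list [] = []"
| "meas_list (Gate A U l # C) = meas_list C"
| "meas_list (Meas s p l # C) = (s, p, l) # meas_list C"

definition nmeas :: "cop list \<Rightarrow> nat" where
  "nmeas C = length (meas_list C)"

text \<open>S_j modulo phases and its level l_j (j = 0,...,m-1).\<close>
definition meas_pauli :: "cop list \<Rightarrow> nat \<Rightarrow> pv" where
  "meas_pauli C j = fst (snd (meas_list C ! j))"

definition meas_level :: "cop list \<Rightarrow> nat \<Rightarrow> nat" where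
  "meas_level C j = snd (snd (meas_list C ! j))"

text \<open>U_l: product of the unitary gates of level l (later gates to the left).\<close>
definition Umat :: "nat \<Rightarrow> cop list \<Rightarrow> nat \<Rightarrow> complex mat" where
  "Umat n C l = foldl (\<lambda>acc g. case g of Gate A U l' \<Rightarrow> if l' = l then U * acc else acc | Meas s p l' \<Rightarrow> acc)
                 (1\<^sub>m (2 ^ n)) C"

text \<open>Bit strings in Z_2^m: functions vanishing at indices >= m.\<close>
definition bs_valid :: "nat \<Rightarrow> (nat \<Rightarrow> bool) \<Rightarrow> bool" where
  "bs_valid m w \<longleftrightarrow> (\<forall>j\<ge>m. \<not> w j)"

definition bs_zero :: "nat \<Rightarrow> bool" where
  "bs_zero = (\<lambda>_. False)"

definition bs_xor :: "(nat \<Rightarrow> bool) \<Rightarrow> (nat \<Rightarrow> bool) \<Rightarrow> nat \<Rightarrow> bool" where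
  "bs_xor a b = (\<lambda>j. a j \<noteq> b j)"

definition proj :: "nat \<Rightarrow> bool \<Rightarrow> pv \<Rightarrow> bool \<Rightarrow> complex mat" where
  "proj n s p b = (1 / 2 :: complex) \<cdot>\<^sub>m
     (1\<^sub>m (2 ^ n) + ((if s then -1 else 1) * (if b then -1 else 1) :: complex) \<cdot>\<^sub>m pmat n p)"

text \<open>Unnormalised evolution operator for outcome string o (j counts measurements).\<close>
fun kraus :: "nat \<Rightarrow> cop list \<Rightarrow> (nat \<Rightarrow> bool) \<Rightarrow> nat \<Rightarrow> complex mat \<Rightarrow> complex mat" where
  "kraus n [] w j M = M"
| "kraus n (Gate A U l # C) w j M = kraus n C w j (U * M)"
| "kraus n (Meas s p l # C) w j M = kraus n C w (Suc j) (proj n s p (w j) * M)"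

definition sqnorm :: "nat \<Rightarrow> complex vec \<Rightarrow> real" where
  "sqnorm d v = (\<Sum>i<d. (cmod (v $ i))\<^sup>2)"

definition outcome_prob :: "nat \<Rightarrow> cop list \<Rightarrow> (nat \<Rightarrow> bool) \<Rightarrow> complex vec \<Rightarrow> real" where
  "outcome_prob n C w psi = sqnorm (2 ^ n) (kraus n C w 0 (1\<^sub>m (2 ^ n)) *\<^sub>v psi)"

definition outcome_code :: "nat \<Rightarrow> cop list \<Rightarrow> (nat \<Rightarrow> bool) set" where
  "outcome_code n C = {w. bs_valid (nmeas C) w \<and>
      (\<exists>psi \<in> carrier_vec (2 ^ n). sqnorm (2 ^ n) psi = 1 \<and> outcome_prob n C w psi \<noteq> 0)}"

definition linear_code :: "(nat \<Rightarrow> bool) set \<Rightarrow> bool" where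
  "linear_code Oc \<longleftrightarrow> bs_zero \<in> Oc \<and> (\<forall>a\<in>Oc. \<forall>b\<in>Oc. bs_xor a b \<in> Oc)"

definition bs_perp :: "nat \<Rightarrow> (nat \<Rightarrow> bool) set \<Rightarrow> (nat \<Rightarrow> bool) set" where
  "bs_perp m Oc = {u. bs_valid m u \<and> (\<forall>w\<in>Oc. even (card {j. j < m \<and> u j \<and> w j}))}"

text \<open>A fault operator in the Pauli group mod phases on qubits (l+0.5, q), 0 <= l <= Delta:
  stored as level index l (standing for l+0.5) to its n-qubit component.\<close>
type_synonym stp = "nat \<Rightarrow> pv"

definition st_valid :: "nat \<Rightarrow> nat \<Rightarrow> stp \<Rightarrow> bool" where
  "st_valid n D F \<longleftrightarrow> (\<forall>l. pv_valid n (F l)) \<and> (\<forall>l>D. F l = pv_one)"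

definition st_one :: stp where
  "st_one = (\<lambda>_. pv_one)"

definition st_mult :: "stp \<Rightarrow> stp \<Rightarrow> stp" where
  "st_mult F G = (\<lambda>l. pv_mult (F l) (G l))"

definition st_commute :: "nat \<Rightarrow> nat \<Rightarrow> stp \<Rightarrow> stp \<Rightarrow> bool" where
  "st_commute n D F G \<longleftrightarrow> even (card {(l, q). l \<le> D \<and> q < n \<and> pv_anticomm_at (F l) (G l) q})"

text \<open>eta l P = eta_{l+0.5}(P).\<close>
definition eta :: "nat \<Rightarrow> pv \<Rightarrow> stp" where
  "eta l P = (\<lambda>k. if k = l then P else pv_one)"

text \<open>Component with index depth C - d of the back-cumulant.\<close>
fun bcl :: "nat \<Rightarrow> cop list \<Rightarrow> stp \<Rightarrow> nat \<Rightarrow> pv" where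
  "bcl n C F 0 = F (depth C)"
| "bcl n C F (Suc d) = pv_mult (F (depth C - Suc d))
      (conj_pv n (adj (Umat n C (depth C - d))) (bcl n C F d))"

definition backcum :: "nat \<Rightarrow> cop list \<Rightarrow> stp \<Rightarrow> stp" where
  "backcum n C F = (\<lambda>l. if l \<le> depth C then bcl n C F (depth C - l) else F l)"

text \<open>F(u) = prod_j eta_{l_j - 0.5}(S_j^{u_j}).\<close>
definition fault_of :: "cop list \<Rightarrow> (nat \<Rightarrow> bool) \<Rightarrow> stp" where
  "fault_of C u = foldr (\<lambda>j acc. if u j then st_mult (eta (meas_level C j - 1) (meas_pauli C j)) acc else acc)
      [0..<nmeas C] st_one"

text \<open>G(P,l) = eta_{l-0.5}(P) eta_{l+0.5}(U_l P U_l^{-1}).\<close>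
definition Gop :: "nat \<Rightarrow> cop list \<Rightarrow> pv \<Rightarrow> nat \<Rightarrow> stp" where
  "Gop n C P l = st_mult (eta (l - 1) P) (eta l (conj_pv n (Umat n C l) P))"

text \<open>L(v) = prod_j G(P_j, l_j)^{v_j}.\<close>
definition Lop :: "nat \<Rightarrow> cop list \<Rightarrow> (nat \<Rightarrow> pv) \<Rightarrow> (nat \<Rightarrow> bool) \<Rightarrow> stp" where
  "Lop n C Ps v = foldr (\<lambda>j acc. if v j then st_mult (Gop n C (Ps j) (meas_level C j)) acc else acc)
      [0..<nmeas C] st_one"

definition comm_space :: "nat \<Rightarrow> cop list \<Rightarrow> nat \<Rightarrow> pv set" where
  "comm_space n C l = {P. pv_valid n P \<and>
      (\<forall>j<nmeas C. meas_level C j = l \<longrightarrow> pv_commute n P (meas_pauli C j))}"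

inductive_set gf2_span :: "('a \<Rightarrow> 'a \<Rightarrow> 'a) \<Rightarrow> 'a \<Rightarrow> 'a set \<Rightarrow> 'a set"
  for gmul :: "'a \<Rightarrow> 'a \<Rightarrow> 'a" and gone :: 'a and S :: "'a set" where
  span_one: "gone \<in> gf2_span gmul gone S"
| span_step: "x \<in> S \<Longrightarrow> y \<in> gf2_span gmul gone S \<Longrightarrow> gmul x y \<in> gf2_span gmul gone S"

definition is_basis :: "('a \<Rightarrow> 'a \<Rightarrow> 'a) \<Rightarrow> 'a \<Rightarrow> 'a set \<Rightarrow> 'a set \<Rightarrow> bool" where
  "is_basis gmul gone V B \<longleftrightarrow> B \<subseteq> V \<and> gf2_span gmul gone B = V \<and>
     (\<forall>b\<in>B. b \<notin> gf2_span gmul gone (B - {b}))"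

end

theory Submission
  imports Defs
begin



lemma bit_lt_pow: "(k::nat) < 2^n \<Longrightarrow> n \<le> q \<Longrightarrow> \<not> bit k q"
  by (simp add: bit_nat_def less_exp less_numeral_extra(3) order_less_le_subst1)

lemma bit_add_pow: "(k::nat) < 2^n \<Longrightarrow> bit (2^n + k) q = (if q = n then True else bit k q)"
proof -
  assume k: "k < 2^n"
  have "2^n + k = Bit_Operations.or (2^n) k"
  proof (rule disjunctive_add_eq_or)
    show "Bit_Operations.and (2^n) k = 0"
      by (rule bit_eqI) (use k bit_lt_pow in \<open>auto simp: bit_and_iff bit_exp_iff\<close>)
  qed
  then show ?thesis using bit_lt_pow[OF k, of n] by (auto simp: bit_or_iff bit_exp_iff)
qed

lemma sum_prod_bits:
  fixes f :: "nat \<Rightarrow> bool \<Rightarrow> 'a::comm_semiring_1"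
  shows "(\<Sum>(k::nat)<2^n. \<Prod>q<n. f q (bit k q)) = (\<Prod>q<n. f q False + f q True)"
proof (induction n)
  case 0
  then show ?case by simp
next
  case (Suc n)
  let ?S = "\<lambda>k. \<Prod>q<n. f q (bit k q)"
  have U: "{..<2^Suc n} = {..<2^n} \<union> (\<lambda>k. 2^n + k) ` {..<(2::nat)^n}"
  proof -
    have "x \<in> (\<lambda>k. 2^n + k) ` {..<(2::nat)^n}" if "x < 2^Suc n" "\<not> x < 2^n" for x
      using that by (intro image_eqI[of _ _ "x - 2^n"]) auto
    then show ?thesis by auto
  qed
  have D: "{..<2^n} \<inter> (\<lambda>k. 2^n + k) ` {..<(2::nat)^n} = {}" by auto
  have inj: "inj_on (\<lambda>k. 2^n + k) {..<(2::nat)^n}" by (auto simp: inj_on_def)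
  have A1: "(\<Prod>q<Suc n. f q (bit k q)) = f n False * ?S k" if "(k::nat) < 2^n" for k
    using bit_lt_pow[OF that, of n] by (simp add: prod.lessThan_Suc mult.commute)
  have A2: "(\<Prod>q<Suc n. f q (bit (2^n + k) q)) = f n True * ?S k" if "(k::nat) < 2^n" for k
  proof -
    have "(\<Prod>q<n. f q (bit (2^n + k) q)) = ?S k"
      by (rule prod.cong) (auto simp: bit_add_pow[OF that])
    then show ?thesis by (simp add: prod.lessThan_Suc bit_add_pow[OF that] mult.commute)
  qed
  have "(\<Sum>(k::nat)<2^Suc n. \<Prod>q<Suc n. f q (bit k q))
      = (\<Sum>(k::nat)<2^n. \<Prod>q<Suc n. f q (bit k q)) + (\<Sum>(k::nat)<2^n. \<Prod>q<Suc n. f q (bit (2^n + k) q))"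
    unfolding U by (subst sum.union_disjoint) (auto simp: D sum.reindex[OF inj])
  also have "\<dots> = (\<Sum>(k::nat)<2^n. f n False * ?S k) + (\<Sum>(k::nat)<2^n. f n True * ?S k)"
    using A1 A2 by simp
  also have "\<dots> = (f n False + f n True) * (\<Sum>(k::nat)<2^n. ?S k)"
    by (simp add: sum_distrib_left distrib_right sum.distrib)
  also have "\<dots> = (\<Prod>q<Suc n. f q False + f q True)"
    using Suc.IH by (simp add: prod.lessThan_Suc mult.commute)
  finally show ?case .
qed


definition xp :: "bool \<times> bool \<Rightarrow> bool \<times> bool \<Rightarrow> bool \<times> bool" where
  "xp a c = (fst a \<noteq> fst c, snd a \<noteq> snd c)"
definition ac1 :: "bool \<times> bool \<Rightarrow> bool \<times> bool \<Rightarrow> bool" where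
  "ac1 a c = ((fst a \<and> snd c) \<noteq> (snd a \<and> fst c))"
definition ph1 :: "bool \<times> bool \<Rightarrow> bool \<times> bool \<Rightarrow> complex" where
  "ph1 a c = (if a = (True,False) \<and> c = (False,True) then - \<i>
     else if a = (False,True) \<and> c = (True,False) then \<i>
     else if a = (True,False) \<and> c = (True,True) then \<i>
     else if a = (True,True) \<and> c = (True,False) then - \<i>
     else if a = (False,True) \<and> c = (True,True) then - \<i>
     else if a = (True,True) \<and> c = (False,True) then \<i> else 1)"

lemma sig_mult: "sigma a x False * sigma c False y + sigma a x True * sigma c True y = ph1 a c * sigma (xp a c) x y"
  by (cases a; cases c; cases x; cases y) (auto simp: sigma_def ph1_def xp_def)

lemma ph1_comm: "ph1 a c = (if ac1 a c then -1 else 1) * ph1 c a"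
  by (cases a; cases c) (auto simp: ac1_def ph1_def)

lemma ph1_nz: "ph1 a c \<noteq> 0"
  by (auto simp: ph1_def)

lemma ph1_self: "ph1 a a = 1"
  by (auto simp: ph1_def)

definition ph :: "nat \<Rightarrow> pv \<Rightarrow> pv \<Rightarrow> complex" where
  "ph n p r = (\<Prod>q<n. ph1 (p q) (r q))"

lemma ph_nz: "ph n p r \<noteq> 0"
  by (simp add: ph_def ph1_nz)

lemma ph_self: "ph n p p = 1"
  by (simp add: ph_def ph1_self)

lemma pmat_carrier[simp]: "pmat n p \<in> carrier_mat (2^n) (2^n)"
  by (simp add: pmat_def)

lemma pmat_dim[simp]: "dim_row (pmat n p) = 2^n" "dim_col (pmat n p) = 2^n"
  by (simp_all add: pmat_def)

lemma pmat_idx: "i < 2^n \<Longrightarrow> j < 2^n \<Longrightarrow> pmat n p $$ (i,j) = (\<Prod>q<n. sigma (p q) (bit i q) (bit j q))"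
  by (simp add: pmat_def)

lemma pv_mult_xp: "pv_mult p r q = xp (p q) (r q)"
  by (simp add: pv_mult_def xp_def)

lemma pmat_mult: "pmat n p * pmat n r = ph n p r \<cdot>\<^sub>m pmat n (pv_mult p r)"
proof (rule eq_matI)
  fix i j assume i: "i < dim_row (ph n p r \<cdot>\<^sub>m pmat n (pv_mult p r))"
    and j: "j < dim_col (ph n p r \<cdot>\<^sub>m pmat n (pv_mult p r))"
  then have i: "i < 2^n" and j: "j < 2^n" by auto
  have "(pmat n p * pmat n r) $$ (i,j) = (\<Sum>k\<in>{0..<2^n}. pmat n p $$ (i,k) * pmat n r $$ (k,j))"
    using i j by (simp add: scalar_prod_def)
  also have "\<dots> = (\<Sum>(k::nat)<2^n. \<Prod>q<n. sigma (p q) (bit i q) (bit k q) * sigma (r q) (bit k q) (bit j q))"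
    using i j by (auto simp: pmat_idx prod.distrib atLeast0LessThan intro!: sum.cong)
  also have "\<dots> = (\<Prod>q<n. sigma (p q) (bit i q) False * sigma (r q) False (bit j q)
                          + sigma (p q) (bit i q) True * sigma (r q) True (bit j q))"
    by (rule sum_prod_bits[where f = "\<lambda>q b. sigma (p q) (bit i q) b * sigma (r q) b (bit j q)"])
  also have "\<dots> = (\<Prod>q<n. ph1 (p q) (r q) * sigma (pv_mult p r q) (bit i q) (bit j q))"
    by (simp add: sig_mult pv_mult_xp)
  also have "\<dots> = (ph n p r \<cdot>\<^sub>m pmat n (pv_mult p r)) $$ (i,j)"
    using i j by (simp add: pmat_idx ph_def prod.distrib)
  finally show "(pmat n p * pmat n r) $$ (i,j) = (ph n p r \<cdot>\<^sub>m pmat n (pv_mult p r)) $$ (i,j)" .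
qed auto

lemma bits_eq_lt: "(i::nat) < 2^n \<Longrightarrow> j < 2^n \<Longrightarrow> (\<forall>q<n. bit i q = bit j q) \<longleftrightarrow> i = j"
proof
  assume i: "i < 2^n" and j: "j < 2^n" and h: "\<forall>q<n. bit i q = bit j q"
  show "i = j"
  proof (rule bit_eqI)
    fix q show "bit i q = bit j q"
      using h bit_lt_pow[OF i, of q] bit_lt_pow[OF j, of q] by (cases "q < n") auto
  qed
qed simp

lemma pmat_one: "pmat n pv_one = 1\<^sub>m (2^n)"
proof (rule eq_matI)
  fix i j assume "i < dim_row (1\<^sub>m (2^n) :: complex mat)" "j < dim_col (1\<^sub>m (2^n) :: complex mat)"
  then have i: "i < 2^n" and j: "j < 2^n" by auto
  have "pmat n pv_one $$ (i,j) = (\<Prod>q<n. if bit i q = bit j q then 1 else 0)"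
    using i j by (simp add: pmat_idx pv_one_def sigma_def)
  also have "\<dots> = (if (\<forall>q<n. bit i q = bit j q) then 1 else 0)"
    by (induction n) (auto simp: prod.lessThan_Suc less_Suc_eq)
  also have "\<dots> = 1\<^sub>m (2^n) $$ (i,j)"
    using i j bits_eq_lt[OF i j] by simp
  finally show "pmat n pv_one $$ (i,j) = 1\<^sub>m (2^n) $$ (i,j)" .
qed auto

lemma pv_mult_self: "pv_mult p p = pv_one"
  by (simp add: pv_mult_def pv_one_def)

lemma one_smult_mat[simp]: "(1::'a::semiring_1) \<cdot>\<^sub>m A = A"
  by (rule eq_matI) auto

lemma pmat_sq: "pmat n p * pmat n p = 1\<^sub>m (2^n)"
  by (simp add: pmat_mult ph_self pv_mult_self pmat_one)




definition par :: "'a set \<Rightarrow> ('a \<Rightarrow> bool) \<Rightarrow> bool" where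
  "par A P = odd (card {x\<in>A. P x})"

lemma par_empty[simp]: "par {} P = False"
  by (simp add: par_def)

lemma par_insert: "finite A \<Longrightarrow> x \<notin> A \<Longrightarrow> par (insert x A) P = (P x \<noteq> par A P)"
proof -
  assume f: "finite A" and x: "x \<notin> A"
  show ?thesis
  proof (cases "P x")
    case True
    then have "{y\<in>insert x A. P y} = insert x {y\<in>A. P y}" by auto
    then show ?thesis using f x True by (simp add: par_def)
  next
    case False
    then have "{y\<in>insert x A. P y} = {y\<in>A. P y}" by auto
    then show ?thesis using False by (simp add: par_def)
  qed
qed

lemma par_xor: assumes "finite A" shows "par A (\<lambda>x. P x \<noteq> Q x) = (par A P \<noteq> par A Q)"
  using assms by (induction A rule: finite_induct) (auto simp: par_insert)

lemma par_false[simp]: "par A (\<lambda>_. False) = False"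
  by (simp add: par_def)

lemma par_cong: "(\<And>x. x \<in> A \<Longrightarrow> P x = Q x) \<Longrightarrow> par A P = par A Q"
  unfolding par_def by (metis (mono_tags, lifting) Collect_cong)

lemma par_lessThan_Suc: "par {..<Suc m} P = (P m \<noteq> par {..<m} P)"
  by (simp add: lessThan_Suc par_insert)

lemma par_single: "finite A \<Longrightarrow> (\<And>x. x \<in> A \<Longrightarrow> P x \<Longrightarrow> x = a) \<Longrightarrow> par A P = (a \<in> A \<and> P a)"
proof -
  assume f: "finite A" and h: "\<And>x. x \<in> A \<Longrightarrow> P x \<Longrightarrow> x = a"
  have "{x\<in>A. P x} = (if a \<in> A \<and> P a then {a} else {})" using h by auto
  then show ?thesis by (simp add: par_def)
qed

lemma par_Sigma: "finite A \<Longrightarrow> finite B \<Longrightarrow> par (A \<times> B) (\<lambda>(l,q). P l q) = par A (\<lambda>l. par B (P l))"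
proof (induction A rule: finite_induct)
  case empty
  then show ?case by (simp add: par_def)
next
  case (insert x A)
  have e: "{z \<in> insert x A \<times> B. (\<lambda>(l,q). P l q) z} = Pair x ` {q\<in>B. P x q} \<union> {z \<in> A \<times> B. (\<lambda>(l,q). P l q) z}"
    by auto
  have d: "Pair x ` {q\<in>B. P x q} \<inter> {z \<in> A \<times> B. (\<lambda>(l,q). P l q) z} = {}"
    using insert by auto
  have "card {z \<in> insert x A \<times> B. (\<lambda>(l,q). P l q) z} = card {q\<in>B. P x q} + card {z \<in> A \<times> B. (\<lambda>(l,q). P l q) z}"
    unfolding e using insert d by (subst card_Un_disjoint) (auto simp: card_image inj_on_def)
  then have "par (insert x A \<times> B) (\<lambda>(l,q). P l q) = (par B (P x) \<noteq> par (A \<times> B) (\<lambda>(l,q). P l q))"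
    by (simp add: par_def)
  then show ?case using insert by (simp add: par_insert)
qed

lemma prod_sign: "(\<Prod>q<(n::nat). if A q then -1 else 1 :: complex) = (if par {..<n} A then -1 else 1)"
  by (induction n) (auto simp: prod.lessThan_Suc par_lessThan_Suc)

definition sp :: "nat \<Rightarrow> pv \<Rightarrow> pv \<Rightarrow> bool" where
  "sp n p r = par {..<n} (pv_anticomm_at p r)"

lemma commute_sp: "pv_commute n p r = (\<not> sp n p r)"
proof -
  have "{q. q < n \<and> pv_anticomm_at p r q} = {q\<in>{..<n}. pv_anticomm_at p r q}" by auto
  then show ?thesis by (simp add: pv_commute_def sp_def par_def)
qed

lemma anticomm_ac1: "pv_anticomm_at p r q = ac1 (p q) (r q)"
  by (simp add: pv_anticomm_at_def ac1_def)

lemma sp_sym: "sp n p r = sp n r p"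
  unfolding sp_def by (rule par_cong) (auto simp: pv_anticomm_at_def)

lemma sp_mult_left: "sp n (pv_mult p p') r = (sp n p r \<noteq> sp n p' r)"
proof -
  have "sp n (pv_mult p p') r = par {..<n} (\<lambda>q. pv_anticomm_at p r q \<noteq> pv_anticomm_at p' r q)"
    unfolding sp_def by (rule par_cong) (auto simp: pv_anticomm_at_def pv_mult_def)
  then show ?thesis using par_xor[of "{..<n}" "pv_anticomm_at p r" "pv_anticomm_at p' r"] by (simp add: sp_def)
qed

lemma sp_mult_right: "sp n r (pv_mult p p') = (sp n r p \<noteq> sp n r p')"
  using sp_mult_left sp_sym by metis

lemma sp_one[simp]: "sp n pv_one r = False" "sp n r pv_one = False"
  by (simp_all add: sp_def pv_anticomm_at_def pv_one_def par_def)

lemma ph_comm: "ph n p r = (if sp n p r then -1 else 1) * ph n r p"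
proof -
  have "ph n p r = (\<Prod>q<n. (if ac1 (p q) (r q) then -1 else 1) * ph1 (r q) (p q))"
    unfolding ph_def by (rule prod.cong) (auto simp: ph1_comm[of "p _"])
  also have "\<dots> = (\<Prod>q<n. if pv_anticomm_at p r q then -1 else 1) * ph n r p"
    by (simp add: prod.distrib ph_def anticomm_ac1)
  finally show ?thesis by (simp add: prod_sign sp_def)
qed

lemma pv_mult_comm: "pv_mult p r = pv_mult r p"
  by (auto simp: pv_mult_def)

lemma pv_mult_assoc: "pv_mult (pv_mult p r) t = pv_mult p (pv_mult r t)"
  by (auto simp: pv_mult_def)

lemma pv_mult_one[simp]: "pv_mult pv_one p = p" "pv_mult p pv_one = p"
  by (auto simp: pv_mult_def pv_one_def)

lemma pmat_comm: "pmat n p * pmat n r = (if sp n p r then -1 else 1) \<cdot>\<^sub>m (pmat n r * pmat n p)"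
proof -
  have "pmat n p * pmat n r = ((if sp n p r then -1 else 1) * ph n r p) \<cdot>\<^sub>m pmat n (pv_mult r p)"
    by (subst ph_comm[symmetric]) (simp add: pmat_mult pv_mult_comm)
  also have "\<dots> = (if sp n p r then -1 else 1) \<cdot>\<^sub>m (pmat n r * pmat n p)"
    by (auto simp: pmat_mult intro!: eq_matI)
  finally show ?thesis .
qed


lemma smult_smult_mat: "a \<cdot>\<^sub>m (b \<cdot>\<^sub>m A) = (a * b :: 'a::semiring_1) \<cdot>\<^sub>m A"
  by (rule eq_matI) (auto simp: mult.assoc)

lemma smult_pmat_cancel: assumes "c \<cdot>\<^sub>m pmat n p = d \<cdot>\<^sub>m pmat n p" shows "c = d"
proof -
  have "(c \<cdot>\<^sub>m pmat n p) * pmat n p = (d \<cdot>\<^sub>m pmat n p) * pmat n p" using assms by simp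
  then have "c \<cdot>\<^sub>m (1\<^sub>m (2^n)) = d \<cdot>\<^sub>m (1\<^sub>m (2^n) :: complex mat)"
    by (simp add: mult_smult_assoc_mat[of _ "2^n" "2^n" _ "2^n"] pmat_sq)
  then have "(c \<cdot>\<^sub>m (1\<^sub>m (2^n))) $$ (0,0) = (d \<cdot>\<^sub>m (1\<^sub>m (2^n) :: complex mat)) $$ (0,0)" by simp
  then show ?thesis by simp
qed

lemma sigma_x0: "sigma (False, z) b b = (if z \<and> b then -1 else 1)"
  by (auto simp: sigma_def)

lemma sigma_x1: "sigma (True, z) False False = 0"
  by (auto simp: sigma_def)

lemma pmat_scalar_id: assumes v: "pv_valid n t" and e: "pmat n t = k \<cdot>\<^sub>m 1\<^sub>m (2^n)"
  shows "t = pv_one"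
proof -
  have "pmat n t * pmat n t = (k * k) \<cdot>\<^sub>m 1\<^sub>m (2^n)"
    unfolding e by (simp add: mult_smult_assoc_mat[of _ "2^n" "2^n" _ "2^n"] mult_smult_distrib[of _ "2^n" "2^n" _ "2^n"] smult_smult_mat)
  then have "(1\<^sub>m (2^n) :: complex mat) $$ (0,0) = ((k * k) \<cdot>\<^sub>m 1\<^sub>m (2^n)) $$ (0,0)" by (simp add: pmat_sq)
  then have kk: "k * k = 1" by simp
  then have k0: "k \<noteq> 0" by auto
  have e00: "pmat n t $$ (0,0) = k" using e by simp
  have x: "\<not> fst (t q)" if "q < n" for q
  proof
    assume "fst (t q)"
    then obtain z where tq: "t q = (True, z)" by (cases "t q") auto
    have "pmat n t $$ (0,0) = (\<Prod>q<n. sigma (t q) False False)" by (simp add: pmat_idx)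
    also have "\<dots> = 0" using that tq sigma_x1 by (intro prod_zero) (auto intro!: bexI[of _ q])
    finally show False using e00 k0 by simp
  qed
  have z: "\<not> snd (t q)" if q: "q < n" for q
  proof
    assume zq: "snd (t q)"
    have tt: "t q' = (False, snd (t q'))" if "q' < n" for q' using x[OF that] by (cases "t q'") auto
    have q2: "(2::nat)^q < 2^n" using q by simp
    have "pmat n t $$ (0,0) = (\<Prod>q<n. sigma (t q) False False)" by (simp add: pmat_idx)
    also have "\<dots> = 1"
    proof (rule prod.neutral, intro ballI)
      fix x assume "x \<in> {..<n}"
      then have "t x = (False, snd (t x))" using tt by simp
      then show "sigma (t x) False False = 1" using sigma_x0[of "snd (t x)" False] by simp
    qed
    finally have k1: "k = 1" using e00 by simp
    have "pmat n t $$ (2^q,2^q) = (\<Prod>q'<n. sigma (t q') (bit ((2::nat)^q) q') (bit ((2::nat)^q) q'))"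
      using q2 by (simp add: pmat_idx)
    also have "\<dots> = (\<Prod>q'<n. if q' = q then -1 else 1)"
    proof (rule prod.cong)
      fix q' assume "q' \<in> {..<n}"
      then have q': "q' < n" by simp
      have b: "bit ((2::nat)^q) q' = (q' = q)" by (auto simp: bit_exp_iff)
      show "sigma (t q') (bit ((2::nat)^q) q') (bit ((2::nat)^q) q') = (if q' = q then -1 else 1)"
        unfolding b using tt[OF q'] zq sigma_x0[of "snd (t q')"] by (cases "q' = q") force+
    qed simp
    also have "\<dots> = -1" using q by (simp add: prod.If_cases)
    finally have "pmat n t $$ (2^q,2^q) = -1" .
    moreover have "pmat n t $$ (2^q,2^q) = k" using e q2 by simp
    ultimately show False using k1 by simp
  qed
  show ?thesis
  proof
    fix q show "t q = pv_one q"
    proof (cases "q < n")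
      case True then show ?thesis using x[OF True] z[OF True] by (cases "t q") (auto simp: pv_one_def)
    next
      case False then show ?thesis using v by (simp add: pv_valid_def pv_one_def)
    qed
  qed
qed

lemma pv_valid_mult: "pv_valid n p \<Longrightarrow> pv_valid n r \<Longrightarrow> pv_valid n (pv_mult p r)"
  by (simp add: pv_valid_def pv_mult_def)

lemma pv_valid_one[simp]: "pv_valid n pv_one"
  by (simp add: pv_valid_def pv_one_def)

lemma pv_mult_eq_one: "pv_mult p r = pv_one \<Longrightarrow> p = r"
  by (auto simp: pv_mult_def pv_one_def fun_eq_iff prod_eq_iff)

lemma pmat_inj: assumes vp: "pv_valid n p" and vr: "pv_valid n r" and c: "c \<noteq> 0"
  and e: "c \<cdot>\<^sub>m pmat n p = d \<cdot>\<^sub>m pmat n r" shows "p = r"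
proof -
  have "(c \<cdot>\<^sub>m pmat n p) * pmat n r = (d \<cdot>\<^sub>m pmat n r) * pmat n r" using e by simp
  then have "(c * ph n p r) \<cdot>\<^sub>m pmat n (pv_mult p r) = d \<cdot>\<^sub>m 1\<^sub>m (2^n)"
    by (simp add: mult_smult_assoc_mat[of _ "2^n" "2^n" _ "2^n"] pmat_sq pmat_mult smult_smult_mat)
  then have "(1 / (c * ph n p r)) \<cdot>\<^sub>m ((c * ph n p r) \<cdot>\<^sub>m pmat n (pv_mult p r))
           = (1 / (c * ph n p r)) \<cdot>\<^sub>m (d \<cdot>\<^sub>m 1\<^sub>m (2^n))" by simp
  then have "pmat n (pv_mult p r) = (d / (c * ph n p r)) \<cdot>\<^sub>m 1\<^sub>m (2^n)"
    using c ph_nz[of n p r] by (simp add: smult_smult_mat)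
  then have "pv_mult p r = pv_one" by (rule pmat_scalar_id[OF pv_valid_mult[OF vp vr]])
  then show ?thesis by (rule pv_mult_eq_one)
qed




lemma adj_carrier: "U \<in> carrier_mat a b \<Longrightarrow> adj U \<in> carrier_mat b a"
  by (simp add: adj_def)

lemma adj_adj: "adj (adj U) = U"
  by (rule eq_matI) (auto simp: adj_def)

lemma adj_mult: assumes "A \<in> carrier_mat a b" "B \<in> carrier_mat b c"
  shows "adj (A * B) = adj B * adj A"
proof (rule eq_matI)
  fix i j assume "i < dim_row (adj B * adj A)" "j < dim_col (adj B * adj A)"
  then have i: "i < c" and j: "j < a" using assms by (auto simp: adj_def)
  show "adj (A * B) $$ (i, j) = (adj B * adj A) $$ (i, j)"
    using assms i j by (auto simp: adj_def scalar_prod_def intro: sum.cong)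
qed (use assms in \<open>auto simp: adj_def\<close>)

lemma adj_one: "adj (1\<^sub>m N) = (1\<^sub>m N :: complex mat)"
  by (rule eq_matI) (auto simp: adj_def)

definition good :: "nat \<Rightarrow> complex mat \<Rightarrow> bool" where
  "good n U \<longleftrightarrow> U \<in> carrier_mat (2^n) (2^n) \<and> adj U * U = 1\<^sub>m (2^n) \<and> clifford_n n U"

lemma sandwich: assumes U: "U \<in> carrier_mat N N" and uu: "adj U * U = 1\<^sub>m N" and M: "M \<in> carrier_mat N N"
  shows "adj U * (U * M * adj U) * U = M"
proof -
  have aU: "adj U \<in> carrier_mat N N" using U by (rule adj_carrier)
  have "adj U * (U * M * adj U) * U = (adj U * U) * M * (adj U * U)"
    using U M aU by (simp add: assoc_mult_mat[of _ N N _ N _ N])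
  also have "\<dots> = M" using uu M by simp
  finally show ?thesis .
qed

lemma sandwich_mult: assumes U: "U \<in> carrier_mat N N" and uu: "adj U * U = 1\<^sub>m N"
  and A: "A \<in> carrier_mat N N" and B: "B \<in> carrier_mat N N"
  shows "(U * A * adj U) * (U * B * adj U) = U * (A * B) * adj U"
proof -
  have aU: "adj U \<in> carrier_mat N N" using U by (rule adj_carrier)
  have "(U * A * adj U) * (U * B * adj U) = U * A * (adj U * U) * B * adj U"
    using U A B aU by (simp add: assoc_mult_mat[of _ N N _ N _ N])
  also have "\<dots> = U * (A * B) * adj U"
    using U A B aU uu by (simp add: assoc_mult_mat[of _ N N _ N _ N])
  finally show ?thesis .
qed

lemma smult_sandwich: fixes U V M :: "complex mat" assumes "U \<in> carrier_mat N N" "V \<in> carrier_mat N N" "M \<in> carrier_mat N N"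
  shows "U * (s \<cdot>\<^sub>m M) * V = s \<cdot>\<^sub>m (U * M * V)"
proof -
  have "U * (s \<cdot>\<^sub>m M) = s \<cdot>\<^sub>m (U * M)" by (rule mult_smult_distrib[OF assms(1,3)])
  moreover have "(s \<cdot>\<^sub>m (U * M)) * V = s \<cdot>\<^sub>m (U * M * V)"
    by (rule mult_smult_assoc_mat) (use assms in auto)
  ultimately show ?thesis by simp
qed

lemma conj_spec: assumes g: "good n U" and v: "pv_valid n p"
  shows "pv_valid n (conj_pv n U p) \<and> (\<exists>c. c \<noteq> 0 \<and> U * pmat n p * adj U = c \<cdot>\<^sub>m pmat n (conj_pv n U p))"
proof -
  have U: "U \<in> carrier_mat (2^n) (2^n)" and uu: "adj U * U = 1\<^sub>m (2^n)" and cl: "clifford_n n U"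
    using g by (auto simp: good_def)
  have aU: "adj U \<in> carrier_mat (2^n) (2^n)" using U by (rule adj_carrier)
  obtain c r where vr: "pv_valid n r" and e: "U * pmat n p * adj U = c \<cdot>\<^sub>m pmat n r"
    using cl v by (auto simp: clifford_n_def)
  have c0: "c \<noteq> 0"
  proof
    assume c: "c = 0"
    have "pmat n p = adj U * (U * pmat n p * adj U) * U" using sandwich[OF U uu] by simp
    also have "\<dots> = adj U * (0 \<cdot>\<^sub>m pmat n r) * U" using e c by simp
    also have "\<dots> = 0 \<cdot>\<^sub>m pmat n p" using aU U by (auto intro!: eq_matI simp: scalar_prod_def)
    finally have "1 \<cdot>\<^sub>m pmat n p = 0 \<cdot>\<^sub>m pmat n p" by simp
    then show False using smult_pmat_cancel by fastforce
  qed
  have P: "pv_valid n r \<and> (\<exists>c. U * pmat n p * adj U = c \<cdot>\<^sub>m pmat n r)" using vr e by blast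
  have uniq: "r' = r" if "pv_valid n r' \<and> (\<exists>c. U * pmat n p * adj U = c \<cdot>\<^sub>m pmat n r')" for r'
  proof -
    from that obtain c' where e': "U * pmat n p * adj U = c' \<cdot>\<^sub>m pmat n r'" and vr': "pv_valid n r'" by blast
    have "c \<cdot>\<^sub>m pmat n r = c' \<cdot>\<^sub>m pmat n r'" using e e' by simp
    from pmat_inj[OF vr vr' c0 this] show ?thesis by simp
  qed
  have "conj_pv n U p = r" unfolding conj_pv_def using P uniq by (rule the_equality)
  then show ?thesis using vr e c0 by blast
qed

lemma conj_valid: "good n U \<Longrightarrow> pv_valid n p \<Longrightarrow> pv_valid n (conj_pv n U p)"
  using conj_spec by blast

lemma conj_hom: assumes g: "good n U" and vp: "pv_valid n p" and vr: "pv_valid n r"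
  shows "conj_pv n U (pv_mult p r) = pv_mult (conj_pv n U p) (conj_pv n U r)"
proof -
  have U: "U \<in> carrier_mat (2^n) (2^n)" and uu: "adj U * U = 1\<^sub>m (2^n)"
    using g by (auto simp: good_def)
  have aU: "adj U \<in> carrier_mat (2^n) (2^n)" using U by (rule adj_carrier)
  obtain c where c: "c \<noteq> 0" "U * pmat n p * adj U = c \<cdot>\<^sub>m pmat n (conj_pv n U p)"
    using conj_spec[OF g vp] by blast
  obtain d where d: "d \<noteq> 0" "U * pmat n r * adj U = d \<cdot>\<^sub>m pmat n (conj_pv n U r)"
    using conj_spec[OF g vr] by blast
  obtain e where e: "e \<noteq> 0" "U * pmat n (pv_mult p r) * adj U = e \<cdot>\<^sub>m pmat n (conj_pv n U (pv_mult p r))"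
    using conj_spec[OF g pv_valid_mult[OF vp vr]] by blast
  let ?p' = "conj_pv n U p" and ?r' = "conj_pv n U r"
  have "U * (pmat n p * pmat n r) * adj U = (c \<cdot>\<^sub>m pmat n ?p') * (d \<cdot>\<^sub>m pmat n ?r')"
    using sandwich_mult[OF U uu, of "pmat n p" "pmat n r"] c d by simp
  also have "\<dots> = (c * d * ph n ?p' ?r') \<cdot>\<^sub>m pmat n (pv_mult ?p' ?r')"
    by (simp add: mult_smult_assoc_mat[of _ "2^n" "2^n" _ "2^n"] mult_smult_distrib[of _ "2^n" "2^n" _ "2^n"]
        smult_smult_mat pmat_mult mult.assoc mult.left_commute)
  finally have 1: "U * (pmat n p * pmat n r) * adj U = (c * d * ph n ?p' ?r') \<cdot>\<^sub>m pmat n (pv_mult ?p' ?r')" .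
  have "U * (pmat n p * pmat n r) * adj U = U * (ph n p r \<cdot>\<^sub>m pmat n (pv_mult p r)) * adj U"
    by (simp add: pmat_mult)
  also have "\<dots> = ph n p r \<cdot>\<^sub>m (U * pmat n (pv_mult p r) * adj U)"
    using U aU by (simp add: mult_smult_assoc_mat[of _ "2^n" "2^n" _ "2^n"] mult_smult_distrib[of _ "2^n" "2^n" _ "2^n"])
  also have "\<dots> = (ph n p r * e) \<cdot>\<^sub>m pmat n (conj_pv n U (pv_mult p r))"
    using e by (simp add: smult_smult_mat)
  finally have 2: "U * (pmat n p * pmat n r) * adj U = (ph n p r * e) \<cdot>\<^sub>m pmat n (conj_pv n U (pv_mult p r))" .
  show ?thesis
    by (rule pmat_inj[OF conj_valid[OF g pv_valid_mult[OF vp vr]] pv_valid_mult[OF conj_valid[OF g vp] conj_valid[OF g vr]]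
          _ trans[OF 2[symmetric] 1]]) (use e ph_nz in auto)
qed


lemma conj_sp: assumes g: "good n U" and vp: "pv_valid n p" and vr: "pv_valid n r"
  shows "sp n (conj_pv n U p) (conj_pv n U r) = sp n p r"
proof -
  have U: "U \<in> carrier_mat (2^n) (2^n)" and uu: "adj U * U = 1\<^sub>m (2^n)"
    using g by (auto simp: good_def)
  have aU: "adj U \<in> carrier_mat (2^n) (2^n)" using U by (rule adj_carrier)
  obtain c where c: "c \<noteq> 0" "U * pmat n p * adj U = c \<cdot>\<^sub>m pmat n (conj_pv n U p)"
    using conj_spec[OF g vp] by blast
  obtain d where d: "d \<noteq> 0" "U * pmat n r * adj U = d \<cdot>\<^sub>m pmat n (conj_pv n U r)"
    using conj_spec[OF g vr] by blast
  let ?p' = "conj_pv n U p" and ?r' = "conj_pv n U r"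
  define s where "s = (if sp n p r then -1 else 1 :: complex)"
  define s' where "s' = (if sp n ?p' ?r' then -1 else 1 :: complex)"
  have "U * (pmat n p * pmat n r) * adj U = U * (s \<cdot>\<^sub>m (pmat n r * pmat n p)) * adj U"
    by (simp add: pmat_comm[of n p r] s_def)
  also have "\<dots> = s \<cdot>\<^sub>m (U * (pmat n r * pmat n p) * adj U)"
    by (rule smult_sandwich[OF U aU]) (rule mult_carrier_mat[of _ _ "2^n"]; simp)
  finally have e1: "U * (pmat n p * pmat n r) * adj U = s \<cdot>\<^sub>m (U * (pmat n r * pmat n p) * adj U)" .
  have L: "U * (pmat n p * pmat n r) * adj U = (c * d * s' * ph n ?r' ?p') \<cdot>\<^sub>m pmat n (pv_mult ?r' ?p')"
  proof -
    have "U * (pmat n p * pmat n r) * adj U = (c \<cdot>\<^sub>m pmat n ?p') * (d \<cdot>\<^sub>m pmat n ?r')"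
      using sandwich_mult[OF U uu, of "pmat n p" "pmat n r"] c d by simp
    also have "\<dots> = (c * d) \<cdot>\<^sub>m (pmat n ?p' * pmat n ?r')"
      by (simp add: mult_smult_assoc_mat[of _ "2^n" "2^n" _ "2^n"] mult_smult_distrib[of _ "2^n" "2^n" _ "2^n"] smult_smult_mat mult.commute)
    also have "\<dots> = (c * d) \<cdot>\<^sub>m (s' \<cdot>\<^sub>m (pmat n ?r' * pmat n ?p'))"
      by (simp add: pmat_comm[of n ?p' ?r'] s'_def)
    also have "\<dots> = (c * d * s' * ph n ?r' ?p') \<cdot>\<^sub>m pmat n (pv_mult ?r' ?p')"
      by (simp add: pmat_mult smult_smult_mat mult.assoc)
    finally show ?thesis .
  qed
  have R: "U * (pmat n r * pmat n p) * adj U = (d * c * ph n ?r' ?p') \<cdot>\<^sub>m pmat n (pv_mult ?r' ?p')"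
  proof -
    have "U * (pmat n r * pmat n p) * adj U = (d \<cdot>\<^sub>m pmat n ?r') * (c \<cdot>\<^sub>m pmat n ?p')"
      using sandwich_mult[OF U uu, of "pmat n r" "pmat n p"] c d by simp
    also have "\<dots> = (d * c * ph n ?r' ?p') \<cdot>\<^sub>m pmat n (pv_mult ?r' ?p')"
      by (simp add: mult_smult_assoc_mat[of _ "2^n" "2^n" _ "2^n"] mult_smult_distrib[of _ "2^n" "2^n" _ "2^n"]
          smult_smult_mat pmat_mult mult.assoc mult.left_commute)
    finally show ?thesis .
  qed
  have "(c * d * s' * ph n ?r' ?p') \<cdot>\<^sub>m pmat n (pv_mult ?r' ?p') = (s * (d * c * ph n ?r' ?p')) \<cdot>\<^sub>m pmat n (pv_mult ?r' ?p')"
    using e1 L R by (simp add: smult_smult_mat)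
  then have "c * d * s' * ph n ?r' ?p' = s * (d * c * ph n ?r' ?p')" by (rule smult_pmat_cancel)
  then have "s' = s" using c d ph_nz[of n ?r' ?p'] by (simp add: mult.commute mult.left_commute)
  then show ?thesis by (simp add: s_def s'_def split: if_splits)
qed

lemma conj_inj: assumes g: "good n U" and vp: "pv_valid n p" and vr: "pv_valid n r"
  and e: "conj_pv n U p = conj_pv n U r" shows "p = r"
proof -
  have U: "U \<in> carrier_mat (2^n) (2^n)" and uu: "adj U * U = 1\<^sub>m (2^n)"
    using g by (auto simp: good_def)
  have aU: "adj U \<in> carrier_mat (2^n) (2^n)" using U by (rule adj_carrier)
  obtain c where c: "c \<noteq> 0" "U * pmat n p * adj U = c \<cdot>\<^sub>m pmat n (conj_pv n U p)"
    using conj_spec[OF g vp] by blast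
  obtain d where d: "d \<noteq> 0" "U * pmat n r * adj U = d \<cdot>\<^sub>m pmat n (conj_pv n U p)"
    using conj_spec[OF g vr] e by auto
  let ?Y = "adj U * pmat n (conj_pv n U p) * U"
  have "pmat n p = adj U * (c \<cdot>\<^sub>m pmat n (conj_pv n U p)) * U" using sandwich[OF U uu, of "pmat n p"] c by simp
  also have "\<dots> = c \<cdot>\<^sub>m ?Y" using U aU
    by (simp add: mult_smult_assoc_mat[of _ "2^n" "2^n" _ "2^n"] mult_smult_distrib[of _ "2^n" "2^n" _ "2^n"])
  finally have P: "pmat n p = c \<cdot>\<^sub>m ?Y" .
  have "pmat n r = adj U * (d \<cdot>\<^sub>m pmat n (conj_pv n U p)) * U" using sandwich[OF U uu, of "pmat n r"] d by simp
  also have "\<dots> = d \<cdot>\<^sub>m ?Y" using U aU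
    by (simp add: mult_smult_assoc_mat[of _ "2^n" "2^n" _ "2^n"] mult_smult_distrib[of _ "2^n" "2^n" _ "2^n"])
  finally have R: "pmat n r = d \<cdot>\<^sub>m ?Y" .
  have "d \<cdot>\<^sub>m pmat n p = c \<cdot>\<^sub>m pmat n r" using P R by (simp add: smult_smult_mat mult.commute)
  then show ?thesis by (rule pmat_inj[OF vp vr d(1)])
qed

lemma finite_valid: "finite {p. pv_valid n p}"
proof -
  have "{p. pv_valid n p} = {f. \<forall>x. (x \<in> {..<n} \<longrightarrow> f x \<in> UNIV) \<and> (x \<notin> {..<n} \<longrightarrow> f x = (False, False))}"
    by (auto simp: pv_valid_def)
  show ?thesis unfolding \<open>{p. pv_valid n p} = _\<close> by (rule finite_set_of_finite_funs) auto
qed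

lemma conj_surj: assumes g: "good n U" and vx: "pv_valid n x"
  shows "\<exists>p. pv_valid n p \<and> conj_pv n U p = x"
proof -
  have "conj_pv n U ` {p. pv_valid n p} = {p. pv_valid n p}"
    by (rule endo_inj_surj[OF finite_valid]) (auto simp: conj_valid[OF g] inj_on_def intro: conj_inj[OF g])
  then show ?thesis using vx by (metis (mono_tags, lifting) imageE mem_Collect_eq)
qed

lemma conj_adj: assumes g: "good n U" and vx: "pv_valid n x"
  shows "pv_valid n (conj_pv n (adj U) x) \<and> conj_pv n U (conj_pv n (adj U) x) = x"
proof -
  have U: "U \<in> carrier_mat (2^n) (2^n)" and uu: "adj U * U = 1\<^sub>m (2^n)"
    using g by (auto simp: good_def)
  have aU: "adj U \<in> carrier_mat (2^n) (2^n)" using U by (rule adj_carrier)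
  obtain p where vp: "pv_valid n p" and px: "conj_pv n U p = x" using conj_surj[OF g vx] by blast
  obtain c where c: "c \<noteq> 0" "U * pmat n p * adj U = c \<cdot>\<^sub>m pmat n x"
    using conj_spec[OF g vp] px by blast
  have "pmat n p = adj U * (c \<cdot>\<^sub>m pmat n x) * U" using sandwich[OF U uu, of "pmat n p"] c by simp
  also have "\<dots> = c \<cdot>\<^sub>m (adj U * pmat n x * U)" using U aU
    by (simp add: mult_smult_assoc_mat[of _ "2^n" "2^n" _ "2^n"] mult_smult_distrib[of _ "2^n" "2^n" _ "2^n"])
  finally have "(1/c) \<cdot>\<^sub>m pmat n p = (1/c) \<cdot>\<^sub>m (c \<cdot>\<^sub>m (adj U * pmat n x * U))" by simp
  then have E: "adj U * pmat n x * adj (adj U) = (1/c) \<cdot>\<^sub>m pmat n p"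
    using c(1) by (simp add: smult_smult_mat adj_adj)
  have P: "pv_valid n p \<and> (\<exists>c. adj U * pmat n x * adj (adj U) = c \<cdot>\<^sub>m pmat n p)" using vp E by blast
  have uniq: "r' = p" if "pv_valid n r' \<and> (\<exists>c. adj U * pmat n x * adj (adj U) = c \<cdot>\<^sub>m pmat n r')" for r'
  proof -
    from that obtain c' where e': "adj U * pmat n x * adj (adj U) = c' \<cdot>\<^sub>m pmat n r'" and vr': "pv_valid n r'" by blast
    have "(1/c) \<cdot>\<^sub>m pmat n p = c' \<cdot>\<^sub>m pmat n r'" using E e' by simp
    from pmat_inj[OF vp vr' _ this] c(1) show ?thesis by simp
  qed
  have "conj_pv n (adj U) x = p" unfolding conj_pv_def using P uniq by (rule the_equality)
  then show ?thesis using vp px by simp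
qed

lemma sp_adj: assumes g: "good n U" and vp: "pv_valid n p" and vx: "pv_valid n x"
  shows "sp n p (conj_pv n (adj U) x) = sp n (conj_pv n U p) x"
  using conj_sp[OF g vp, of "conj_pv n (adj U) x"] conj_adj[OF g vx] by simp

lemma conj_one: assumes g: "good n U" shows "conj_pv n U pv_one = pv_one"
proof -
  have "conj_pv n U pv_one = conj_pv n U (pv_mult pv_one pv_one)" by simp
  also have "\<dots> = pv_one" using conj_hom[OF g, of pv_one pv_one] by (simp add: pv_mult_self)
  finally show ?thesis .
qed

lemma good_one: "good n (1\<^sub>m (2^n))"
  unfolding good_def clifford_n_def by (auto simp: adj_one intro!: exI[of _ 1])

lemma good_mult: assumes gu: "good n U" and ga: "good n A" shows "good n (U * A)"
proof -
  have U: "U \<in> carrier_mat (2^n) (2^n)" and uu: "adj U * U = 1\<^sub>m (2^n)"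
    using gu by (auto simp: good_def)
  have A: "A \<in> carrier_mat (2^n) (2^n)" and aa: "adj A * A = 1\<^sub>m (2^n)"
    using ga by (auto simp: good_def)
  have aU: "adj U \<in> carrier_mat (2^n) (2^n)" using U by (rule adj_carrier)
  have aA: "adj A \<in> carrier_mat (2^n) (2^n)" using A by (rule adj_carrier)
  have adjm: "adj (U * A) = adj A * adj U" by (rule adj_mult[OF U A])
  have "adj (U * A) * (U * A) = adj A * (adj U * U) * A"
    using U A aU aA adjm by (simp add: assoc_mult_mat[of _ "2^n" "2^n" _ "2^n" _ "2^n"])
  then have un: "adj (U * A) * (U * A) = 1\<^sub>m (2^n)" using uu aa A aA by simp
  have cl: "clifford_n n (U * A)"
    unfolding clifford_n_def
  proof (intro allI impI)
    fix p assume vp: "pv_valid n p"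
    obtain c where c: "A * pmat n p * adj A = c \<cdot>\<^sub>m pmat n (conj_pv n A p)" using conj_spec[OF ga vp] by blast
    obtain d where d: "U * pmat n (conj_pv n A p) * adj U = d \<cdot>\<^sub>m pmat n (conj_pv n U (conj_pv n A p))"
      using conj_spec[OF gu conj_valid[OF ga vp]] by blast
    have cs: "U * A \<in> carrier_mat (2^n) (2^n)" "A * pmat n p \<in> carrier_mat (2^n) (2^n)"
      "A * pmat n p * adj A \<in> carrier_mat (2^n) (2^n)" "U * (A * pmat n p * adj A) \<in> carrier_mat (2^n) (2^n)"
      "U * A * pmat n p \<in> carrier_mat (2^n) (2^n)" "pmat n p * adj A \<in> carrier_mat (2^n) (2^n)"
      "A * (pmat n p * adj A) \<in> carrier_mat (2^n) (2^n)"
      using U A aU aA by (auto intro!: mult_carrier_mat)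
    have "U * A * pmat n p * adj (U * A) = U * (A * pmat n p * adj A) * adj U"
      using U A aU aA adjm cs by (simp add: assoc_mult_mat[of _ "2^n" "2^n" _ "2^n" _ "2^n"])
    also have "\<dots> = c \<cdot>\<^sub>m (U * pmat n (conj_pv n A p) * adj U)" using c U aU
      by (simp add: mult_smult_assoc_mat[of _ "2^n" "2^n" _ "2^n"] mult_smult_distrib[of _ "2^n" "2^n" _ "2^n"])
    also have "\<dots> = (c * d) \<cdot>\<^sub>m pmat n (conj_pv n U (conj_pv n A p))" using d by (simp add: smult_smult_mat)
    finally show "\<exists>c r. pv_valid n r \<and> U * A * pmat n p * adj (U * A) = c \<cdot>\<^sub>m pmat n r"
      using conj_valid[OF gu conj_valid[OF ga vp]] by blast
  qed
  show ?thesis using U A un cl by (simp add: good_def)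
qed




lemma span_base:
  assumes ru: "\<And>x. gmul x gone = x" and x: "x \<in> S"
  shows "x \<in> gf2_span gmul gone S"
  using gf2_span.span_step[OF x gf2_span.span_one[where gmul=gmul and gone=gone and S=S]] ru by simp

lemma span_mult:
  assumes lu: "\<And>x. gmul gone x = x" and assoc: "\<And>x y z. gmul (gmul x y) z = gmul x (gmul y z)"
    and x: "x \<in> gf2_span gmul gone S" and y: "y \<in> gf2_span gmul gone S"
  shows "gmul x y \<in> gf2_span gmul gone S"
  using x
proof (induction rule: gf2_span.induct)
  case span_one
  then show ?case using y lu by simp
next
  case (span_step a b)
  then show ?case using assoc by (metis gf2_span.span_step)
qed

lemma span_mono: assumes "S \<subseteq> T" and "x \<in> gf2_span gmul gone S" shows "x \<in> gf2_span gmul gone T"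
  using assms(2)
proof (induction rule: gf2_span.induct)
  case span_one
  show ?case by (rule gf2_span.span_one)
next
  case (span_step a b)
  then show ?case using assms(1) by (auto intro: gf2_span.span_step)
qed

lemma span_hom:
  assumes x: "x \<in> gf2_span gmul gone S"
    and SV: "S \<subseteq> V" and oneV: "gone \<in> V" and mulV: "\<And>a b. a \<in> V \<Longrightarrow> b \<in> V \<Longrightarrow> gmul a b \<in> V"
    and hmul: "\<And>a b. a \<in> V \<Longrightarrow> b \<in> V \<Longrightarrow> h (gmul a b) = gmul' (h a) (h b)"
    and hone: "h gone = gone'"
  shows "x \<in> V \<and> h x \<in> gf2_span gmul' gone' (h ` S)"
  using x
proof (induction rule: gf2_span.induct)
  case span_one
  then show ?case using oneV hone by (simp add: gf2_span.span_one)
next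
  case (span_step a b)
  then have aV: "a \<in> V" using SV by auto
  then show ?case using span_step mulV hmul by (auto intro: gf2_span.span_step)
qed

section \<open>Bit strings: double orthogonal complement\<close>

definition ip :: "nat \<Rightarrow> (nat \<Rightarrow> bool) \<Rightarrow> (nat \<Rightarrow> bool) \<Rightarrow> bool" where
  "ip m u w = par {..<m} (\<lambda>j. u j \<and> w j)"

lemma ip_xor: "ip m u (bs_xor a b) = (ip m u a \<noteq> ip m u b)"
proof -
  have "ip m u (bs_xor a b) = par {..<m} (\<lambda>j. (u j \<and> a j) \<noteq> (u j \<and> b j))"
    unfolding ip_def by (rule par_cong) (auto simp: bs_xor_def)
  then show ?thesis using par_xor[of "{..<m}" "\<lambda>j. u j \<and> a j" "\<lambda>j. u j \<and> b j"] by (simp add: ip_def)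
qed

lemma ip_Suc: "ip (Suc m) u w = ((u m \<and> w m) \<noteq> ip m u w)"
  by (simp add: ip_def par_lessThan_Suc)

lemma bs_valid_Suc: "bs_valid m w \<Longrightarrow> bs_valid (Suc m) w"
  by (simp add: bs_valid_def)

lemma bs_valid_down: "bs_valid (Suc m) w \<Longrightarrow> \<not> w m \<Longrightarrow> bs_valid m w"
  unfolding bs_valid_def by (metis Suc_le_eq le_neq_implies_less)

lemma perp_perp_aux:
  "Oc \<subseteq> {w. bs_valid m w} \<Longrightarrow> bs_zero \<in> Oc \<Longrightarrow> (\<forall>a\<in>Oc. \<forall>b\<in>Oc. bs_xor a b \<in> Oc) \<Longrightarrow>
   bs_valid m v \<Longrightarrow> v \<notin> Oc \<Longrightarrow>
   \<exists>u. bs_valid m u \<and> (\<forall>w\<in>Oc. \<not> ip m u w) \<and> ip m u v"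
proof (induction m arbitrary: Oc v)
  case 0
  then have "v = bs_zero" by (auto simp: bs_valid_def bs_zero_def)
  then show ?case using 0 by simp
next
  case (Suc m)
  show ?case
  proof (cases "\<exists>w0\<in>Oc. w0 m")
    case False
    then have OV: "Oc \<subseteq> {w. bs_valid m w}" using Suc.prems(1) bs_valid_down by blast
    show ?thesis
    proof (cases "v m")
      case True
      let ?u = "\<lambda>j. j = m"
      have "ip (Suc m) ?u w = w m" for w unfolding ip_def by (subst par_single[of _ _ m]) auto
      then show ?thesis using False True by (intro exI[of _ ?u]) (auto simp: bs_valid_def)
    next
      case vm: False
      then have "bs_valid m v" using Suc.prems(4) bs_valid_down by blast
      from Suc.IH[OF OV Suc.prems(2,3) this Suc.prems(5)] obtain u where
        u: "bs_valid m u" "\<forall>w\<in>Oc. \<not> ip m u w" "ip m u v" by blast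
      have um: "\<not> u m" using u(1) by (simp add: bs_valid_def)
      show ?thesis using u um by (intro exI[of _ u]) (auto simp: ip_Suc bs_valid_Suc)
    qed
  next
    case True
    then obtain w0 where w0: "w0 \<in> Oc" "w0 m" by blast
    let ?O' = "{w\<in>Oc. \<not> w m}"
    have Oc'V: "?O' \<subseteq> {w. bs_valid m w}" using Suc.prems(1) bs_valid_down by blast
    have Oc'0: "bs_zero \<in> ?O'" using Suc.prems(2) by (simp add: bs_zero_def)
    have Oc'x: "\<forall>a\<in>?O'. \<forall>b\<in>?O'. bs_xor a b \<in> ?O'" using Suc.prems(3) by (auto simp: bs_xor_def)
    define v' where "v' = (if v m then bs_xor v w0 else v)"
    have xx: "bs_xor (bs_xor v w0) w0 = v" by (auto simp: bs_xor_def)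
    have v'Oc: "v' \<notin> Oc"
    proof
      assume "v' \<in> Oc"
      then show False using Suc.prems(3,5) w0(1) xx by (cases "v m") (auto simp: v'_def, metis)
    qed
    have v'm: "\<not> v' m" using w0(2) by (auto simp: v'_def bs_xor_def)
    have "bs_valid (Suc m) v'" using Suc.prems(1,4) w0
      by (auto simp: v'_def bs_valid_def bs_xor_def)
    then have v'V: "bs_valid m v'" using v'm bs_valid_down by blast
    from Suc.IH[OF Oc'V Oc'0 Oc'x v'V] v'Oc obtain u' where
      u': "bs_valid m u'" "\<forall>w\<in>?O'. \<not> ip m u' w" "ip m u' v'" by blast
    define c where "c = ip m u' w0"
    define u where "u = u'(m := c)"
    have ipu: "ip (Suc m) u w = ((c \<and> w m) \<noteq> ip m u' w)" for w
    proof -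
      have "ip m u w = ip m u' w" unfolding ip_def by (rule par_cong) (auto simp: u_def)
      then show ?thesis by (simp add: ip_Suc u_def)
    qed
    have uO: "\<not> ip (Suc m) u w" if wO: "w \<in> Oc" for w
    proof (cases "w m")
      case False
      then show ?thesis using u'(2) wO ipu by auto
    next
      case True
      have "bs_xor w w0 \<in> ?O'" using Suc.prems(3) wO w0 True by (auto simp: bs_xor_def)
      then have "\<not> ip m u' (bs_xor w w0)" using u'(2) by blast
      then have "ip m u' w = c" by (simp add: ip_xor c_def)
      then show ?thesis using ipu True by simp
    qed
    have uv: "ip (Suc m) u v"
    proof (cases "v m")
      case False
      then show ?thesis using ipu u'(3) by (simp add: v'_def)
    next
      case True
      have "v = bs_xor v' w0" using True xx by (simp add: v'_def)
      then have "ip (Suc m) u v = (ip (Suc m) u v' \<noteq> ip (Suc m) u w0)" by (simp add: ip_xor)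
      moreover have "\<not> ip (Suc m) u w0" using uO w0(1) by blast
      moreover have "ip (Suc m) u v'" using ipu v'm u'(3) by simp
      ultimately show ?thesis by simp
    qed
    have "bs_valid (Suc m) u" using u' by (auto simp: u_def bs_valid_def)
    then show ?thesis using uO uv by blast
  qed
qed




lemma good_gate: "op_valid n (Gate A U l) \<Longrightarrow> good n U"
  by (simp add: good_def unitary_n_def)

lemma Umat_good_aux:
  "(\<forall>x\<in>set C. op_valid n x) \<Longrightarrow> good n acc \<Longrightarrow>
   good n (foldl (\<lambda>acc g. case g of Gate A U l' \<Rightarrow> if l' = l then U * acc else acc | Meas s p l' \<Rightarrow> acc) acc C)"
proof (induction C arbitrary: acc)
  case Nil
  then show ?case by simp
next
  case (Cons x C)
  show ?case
  proof (cases x)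
    case (Gate A U l')
    then have "good n U" using Cons.prems(1) good_gate by auto
    then have "good n (if l' = l then U * acc else acc)" using Cons.prems(2) good_mult by auto
    then show ?thesis using Cons Gate by simp
  next
    case (Meas s p l')
    then show ?thesis using Cons by simp
  qed
qed

lemma Umat_good: "clifford_circuit n C \<Longrightarrow> good n (Umat n C l)"
  unfolding Umat_def clifford_circuit_def by (rule Umat_good_aux) (auto simp: good_one)

lemma meas_in_set: "x \<in> set (meas_list C) \<Longrightarrow> Meas (fst x) (fst (snd x)) (snd (snd x)) \<in> set C"
  by (induction C rule: meas_list.induct) auto

lemma level_le_depth: "x \<in> set C \<Longrightarrow> op_level x \<le> depth C"
  unfolding depth_def by (rule Max_ge) auto

lemma meas_props: assumes c: "clifford_circuit n C" and j: "j < nmeas C"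
  shows "pv_valid n (meas_pauli C j) \<and> 1 \<le> meas_level C j \<and> meas_level C j \<le> depth C"
proof -
  have "meas_list C ! j \<in> set (meas_list C)" using j by (simp add: nmeas_def)
  then have "Meas (fst (meas_list C ! j)) (meas_pauli C j) (meas_level C j) \<in> set C"
    using meas_in_set unfolding meas_pauli_def meas_level_def by blast
  then show ?thesis using c level_le_depth by (fastforce simp: clifford_circuit_def)
qed

definition disjC :: "cop list \<Rightarrow> bool" where
  "disjC C \<longleftrightarrow> (\<forall>i<length C. \<forall>k<length C. i \<noteq> k \<and> op_level (C ! i) = op_level (C ! k)
        \<longrightarrow> op_supp (C ! i) \<inter> op_supp (C ! k) = {})"

lemma disjC_tl: "disjC (x # C) \<Longrightarrow> disjC C"
  unfolding disjC_def
proof (intro allI impI)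
  fix i k assume h: "\<forall>i<length (x # C). \<forall>k<length (x # C). i \<noteq> k \<and> op_level ((x # C) ! i) = op_level ((x # C) ! k) \<longrightarrow>
            op_supp ((x # C) ! i) \<inter> op_supp ((x # C) ! k) = {}"
    and i: "i < length C" and k: "k < length C" and e: "i \<noteq> k \<and> op_level (C ! i) = op_level (C ! k)"
  show "op_supp (C ! i) \<inter> op_supp (C ! k) = {}" using h[rule_format, of "Suc i" "Suc k"] i k e by simp
qed

lemma disjC_head: assumes d: "disjC (Meas s p l # C)" and y: "y \<in> set (meas_list C)" and lv: "snd (snd y) = l"
  shows "pv_supp p \<inter> pv_supp (fst (snd y)) = {}"
proof -
  have "Meas (fst y) (fst (snd y)) (snd (snd y)) \<in> set C" by (rule meas_in_set[OF y])
  then obtain i where i: "i < length C" "C ! i = Meas (fst y) (fst (snd y)) (snd (snd y))"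
    by (auto simp: in_set_conv_nth)
  have "op_supp ((Meas s p l # C) ! 0) \<inter> op_supp ((Meas s p l # C) ! Suc i) = {}"
    using d i lv unfolding disjC_def by (metis Suc_less_eq length_Cons nat.distinct(1) nth_Cons_0 nth_Cons_Suc op_level.simps(2) zero_less_Suc)
  then show ?thesis using i by simp
qed

lemma meas_disj_aux: "disjC C \<Longrightarrow> j < length (meas_list C) \<Longrightarrow> j' < length (meas_list C) \<Longrightarrow> j \<noteq> j' \<Longrightarrow>
  snd (snd (meas_list C ! j)) = snd (snd (meas_list C ! j')) \<Longrightarrow>
  pv_supp (fst (snd (meas_list C ! j))) \<inter> pv_supp (fst (snd (meas_list C ! j'))) = {}"
proof (induction C arbitrary: j j')
  case Nil
  then show ?case by simp
next
  case (Cons x C)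
  have dC: "disjC C" using Cons.prems(1) by (rule disjC_tl)
  show ?case
  proof (cases x)
    case (Gate A U l)
    then show ?thesis using Cons.IH[OF dC] Cons.prems by simp
  next
    case (Meas s p l)
    note d = Cons.prems(1)[unfolded Meas]
    show ?thesis
    proof (cases j)
      case 0
      then obtain k where k: "j' = Suc k" using Cons.prems(4) by (cases j') auto
      have ky: "meas_list C ! k \<in> set (meas_list C)" using Cons.prems(3) k Meas by simp
      show ?thesis using disjC_head[OF d ky] Cons.prems(5) 0 k Meas by simp
    next
      case (Suc k)
      show ?thesis
      proof (cases j')
        case 0
        have ky: "meas_list C ! k \<in> set (meas_list C)" using Cons.prems(2) Suc Meas by simp
        show ?thesis using disjC_head[OF d ky] Cons.prems(5) 0 Suc Meas by auto
      next
        case (Suc k')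
        then show ?thesis using Cons.IH[OF dC, of k k'] Cons.prems \<open>j = Suc k\<close> Meas by simp
      qed
    qed
  qed
qed

lemma meas_disjoint: assumes c: "clifford_circuit n C" and j: "j < nmeas C" and j': "j' < nmeas C"
  and ne: "j \<noteq> j'" and lv: "meas_level C j = meas_level C j'"
  shows "pv_supp (meas_pauli C j) \<inter> pv_supp (meas_pauli C j') = {}"
  using meas_disj_aux[of C j j'] c j j' ne lv
  by (simp add: disjC_def clifford_circuit_def nmeas_def meas_pauli_def meas_level_def)




lemma st_mult_assoc: "st_mult (st_mult F G) H = st_mult F (st_mult G H)"
  by (simp add: st_mult_def pv_mult_assoc)
lemma st_mult_comm: "st_mult F G = st_mult G F"
  by (simp add: st_mult_def pv_mult_comm)
lemma st_mult_one[simp]: "st_mult st_one F = F" "st_mult F st_one = F"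
  by (simp_all add: st_mult_def st_one_def)
lemma st_mult_self: "st_mult F F = st_one"
  by (simp add: st_mult_def st_one_def pv_mult_self)
lemma st_mult_lc: "st_mult F (st_mult G H) = st_mult G (st_mult F H)"
  by (metis st_mult_assoc st_mult_comm)

lemma st_valid_mult: "st_valid n D F \<Longrightarrow> st_valid n D G \<Longrightarrow> st_valid n D (st_mult F G)"
  by (auto simp: st_valid_def st_mult_def pv_valid_mult)
lemma st_valid_one[simp]: "st_valid n D st_one"
  by (simp add: st_valid_def st_one_def)

definition spst :: "nat \<Rightarrow> nat \<Rightarrow> stp \<Rightarrow> stp \<Rightarrow> bool" where
  "spst n D F G = par {..D} (\<lambda>l. sp n (F l) (G l))"

lemma st_commute_spst: "st_commute n D F G = (\<not> spst n D F G)"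
proof -
  have e: "{(l, q). l \<le> D \<and> q < n \<and> pv_anticomm_at (F l) (G l) q}
      = {z \<in> {..D} \<times> {..<n}. (\<lambda>(l,q). pv_anticomm_at (F l) (G l) q) z}" by auto
  have "st_commute n D F G = (\<not> par ({..D} \<times> {..<n}) (\<lambda>(l,q). pv_anticomm_at (F l) (G l) q))"
    unfolding st_commute_def par_def e by simp
  also have "\<dots> = (\<not> spst n D F G)" by (simp add: par_Sigma spst_def sp_def)
  finally show ?thesis .
qed

lemma spst_mult_left: "spst n D (st_mult F F') G = (spst n D F G \<noteq> spst n D F' G)"
proof -
  have "spst n D (st_mult F F') G = par {..D} (\<lambda>l. sp n (F l) (G l) \<noteq> sp n (F' l) (G l))"
    unfolding spst_def by (rule par_cong) (simp add: st_mult_def sp_mult_left)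
  then show ?thesis using par_xor[of "{..D}" "\<lambda>l. sp n (F l) (G l)" "\<lambda>l. sp n (F' l) (G l)"]
    by (simp add: spst_def)
qed

lemma spst_one[simp]: "spst n D st_one G = False"
  by (simp add: spst_def st_one_def)

lemma eta_comp: "eta k P l = (if l = k then P else pv_one)"
  by (simp add: eta_def)

lemma spst_eta: "k \<le> D \<Longrightarrow> spst n D (eta k P) G = sp n P (G k)"
  unfolding spst_def by (subst par_single[of _ _ k]) (auto simp: eta_comp split: if_splits)

lemma eta_hom: "eta k (pv_mult P Q) = st_mult (eta k P) (eta k Q)"
  by (auto simp: eta_def st_mult_def)
lemma eta_one: "eta k pv_one = st_one"
  by (auto simp: eta_def st_one_def)

lemma st_valid_eta: "pv_valid n P \<Longrightarrow> k \<le> D \<Longrightarrow> st_valid n D (eta k P)"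
  by (auto simp: st_valid_def eta_def)

context
  fixes n :: nat and C :: "cop list"
  assumes circ: "clifford_circuit n C"
begin

lemma Ug: "good n (Umat n C l)"
  by (rule Umat_good[OF circ])

lemma Gop_valid: "pv_valid n P \<Longrightarrow> 1 \<le> l \<Longrightarrow> l \<le> depth C \<Longrightarrow> st_valid n (depth C) (Gop n C P l)"
  unfolding Gop_def by (intro st_valid_mult st_valid_eta conj_valid[OF Ug]) auto

lemma Gop_hom: "pv_valid n P \<Longrightarrow> pv_valid n Q \<Longrightarrow> Gop n C (pv_mult P Q) l = st_mult (Gop n C P l) (Gop n C Q l)"
  unfolding Gop_def by (simp add: conj_hom[OF Ug] eta_hom st_mult_assoc st_mult_lc)

lemma Gop_one: "Gop n C pv_one l = st_one"
  unfolding Gop_def by (simp add: conj_one[OF Ug] eta_one)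

lemma bcl_valid: "(\<And>l. pv_valid n (H l)) \<Longrightarrow> pv_valid n (bcl n C H d)"
  by (induction d) (auto intro: pv_valid_mult conj_valid conj_adj[OF Ug, THEN conjunct1])

lemma backcum_valid: "(\<And>l. pv_valid n (H l)) \<Longrightarrow> pv_valid n (backcum n C H l)"
  by (auto simp: backcum_def bcl_valid)

lemma backcum_top: "backcum n C H (depth C) = H (depth C)"
  by (simp add: backcum_def)

lemma backcum_rec: assumes "1 \<le> l" "l \<le> depth C"
  shows "backcum n C H (l - 1) = pv_mult (H (l - 1)) (conj_pv n (adj (Umat n C l)) (backcum n C H l))"
proof -
  have e: "depth C - (l - 1) = Suc (depth C - l)" using assms by simp
  have e1: "depth C - Suc (depth C - l) = l - 1" and e2: "depth C - (depth C - l) = l" using assms by auto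
  have "backcum n C H (l - 1) = bcl n C H (depth C - (l - 1))" unfolding backcum_def using assms by auto
  also have "\<dots> = bcl n C H (Suc (depth C - l))" by (simp only: e)
  also have "\<dots> = pv_mult (H (depth C - Suc (depth C - l)))
      (conj_pv n (adj (Umat n C (depth C - (depth C - l)))) (bcl n C H (depth C - l)))" by (simp only: bcl.simps)
  also have "\<dots> = pv_mult (H (l - 1)) (conj_pv n (adj (Umat n C l)) (bcl n C H (depth C - l)))" by (simp only: e1 e2)
  also have "bcl n C H (depth C - l) = backcum n C H l" using assms by (simp add: backcum_def)
  finally show ?thesis .
qed

lemma spst_Gop_backcum: assumes l: "1 \<le> l" "l \<le> depth C" and P: "pv_valid n P" and H: "\<And>l. pv_valid n (H l)"
  shows "spst n (depth C) (Gop n C P l) (backcum n C H) = sp n P (H (l - 1))"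
proof -
  let ?B = "backcum n C H" and ?U = "Umat n C l"
  have "spst n (depth C) (Gop n C P l) ?B = (sp n P (?B (l - 1)) \<noteq> sp n (conj_pv n ?U P) (?B l))"
    unfolding Gop_def using l by (simp add: spst_mult_left spst_eta)
  also have "sp n P (?B (l - 1)) = (sp n P (H (l - 1)) \<noteq> sp n P (conj_pv n (adj ?U) (?B l)))"
    by (subst backcum_rec[OF l]) (simp add: sp_mult_right)
  also have "sp n P (conj_pv n (adj ?U) (?B l)) = sp n (conj_pv n ?U P) (?B l)"
    by (rule sp_adj[OF Ug P backcum_valid[OF H]])
  finally show ?thesis by blast
qed

lemma spst_eta_backcum: "spst n (depth C) (eta (depth C) P) (backcum n C H) = sp n P (H (depth C))"
  by (simp add: spst_eta backcum_top)

end

lemma foldr_st_comp: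
  "(foldr (\<lambda>j acc. if v j then st_mult (g j) acc else acc) xs st_one) l
   = foldr (\<lambda>j acc. if v j then pv_mult (g j l) acc else acc) xs pv_one"
  by (induction xs) (auto simp: st_mult_def st_one_def)

lemma foldr_par:
  assumes fm: "\<And>x y. f (mu x y) = (f x \<noteq> f y)" and fo: "f eo = False" and d: "distinct xs"
  shows "f (foldr (\<lambda>j acc. if v j then mu (g j) acc else acc) xs eo) = par (set xs) (\<lambda>j. v j \<and> f (g j))"
  using d by (induction xs) (auto simp: fo fm par_insert)

lemma foldr_closed:
  assumes "Q eo" "\<And>x y. Q x \<Longrightarrow> Q y \<Longrightarrow> Q (mu x y)" "\<forall>j\<in>set xs. v j \<longrightarrow> Q (g j)"
  shows "Q (foldr (\<lambda>j acc. if v j then mu (g j) acc else acc) xs eo)"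
  using assms(3) by (induction xs) (auto intro: assms(1,2))




lemma set_upt0: "set [0..<m] = {..<m}"
  by auto

lemma disj_sp: "pv_supp p \<inter> pv_supp r = {} \<Longrightarrow> \<not> sp n p r"
proof -
  assume d: "pv_supp p \<inter> pv_supp r = {}"
  have "\<not> pv_anticomm_at p r q" for q
  proof -
    have "p q = (False, False) \<or> r q = (False, False)" using d by (auto simp: pv_supp_def)
    then show ?thesis by (auto simp: pv_anticomm_at_def)
  qed
  then show ?thesis by (simp add: sp_def par_def)
qed

lemma Lop_hom_aux:
  "foldr (\<lambda>j acc. if bs_xor a b j then st_mult (g j) acc else acc) xs st_one
   = st_mult (foldr (\<lambda>j acc. if a j then st_mult (g j) acc else acc) xs st_one)
             (foldr (\<lambda>j acc. if b j then st_mult (g j) acc else acc) xs st_one)"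
proof (induction xs)
  case Nil
  then show ?case by simp
next
  case (Cons x xs)
  have h: "st_mult (st_mult g A) (st_mult g B) = st_mult A B" for g A B
    by (auto simp: st_mult_def pv_mult_def fun_eq_iff)
  show ?case
  proof (cases "a x"; cases "b x")
    assume "a x" "b x" then show ?thesis using Cons by (simp add: bs_xor_def h)
  next
    assume "a x" "\<not> b x" then show ?thesis using Cons by (simp add: bs_xor_def st_mult_assoc)
  next
    assume "\<not> a x" "b x" then show ?thesis using Cons by (simp add: bs_xor_def st_mult_lc)
  next
    assume "\<not> a x" "\<not> b x" then show ?thesis using Cons by (simp add: bs_xor_def)
  qed
qed

lemma Lop_hom: "Lop n C Ps (bs_xor a b) = st_mult (Lop n C Ps a) (Lop n C Ps b)"
  unfolding Lop_def by (rule Lop_hom_aux)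

lemma Lop_zero: "Lop n C Ps bs_zero = st_one"
proof -
  have "foldr (\<lambda>j acc. if bs_zero j then st_mult (g j) acc else acc) xs st_one = st_one" for g xs
    by (induction xs) (simp_all add: bs_zero_def)
  then show ?thesis unfolding Lop_def by simp
qed

lemma Lop_restrict: "Lop n C Ps v = Lop n C Ps (\<lambda>j. v j \<and> j < nmeas C)"
proof -
  have "\<forall>j\<in>set xs. j < nmeas C \<Longrightarrow>
    foldr (\<lambda>j acc. if v j then st_mult (Gop n C (Ps j) (meas_level C j)) acc else acc) xs st_one
    = foldr (\<lambda>j acc. if v j \<and> j < nmeas C then st_mult (Gop n C (Ps j) (meas_level C j)) acc else acc) xs st_one" for xs
    by (induction xs) auto
  then show ?thesis unfolding Lop_def by simp
qed

context
  fixes n :: nat and C :: "cop list" and Ps :: "nat \<Rightarrow> pv"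
  assumes circ: "clifford_circuit n C"
    and Ps: "\<forall>j<nmeas C. pv_valid n (Ps j) \<and> pv_supp (Ps j) \<subseteq> pv_supp (meas_pauli C j)
               \<and> \<not> pv_commute n (Ps j) (meas_pauli C j)"
begin

lemma fault_comp: "fault_of C u l = foldr (\<lambda>j acc. if u j then pv_mult (eta (meas_level C j - 1) (meas_pauli C j) l) acc else acc) [0..<nmeas C] pv_one"
  by (simp add: fault_of_def foldr_st_comp)

lemma fault_valid: "pv_valid n (fault_of C u l)"
  unfolding fault_comp
  by (rule foldr_closed[where Q = "pv_valid n"]) (auto intro: pv_valid_mult simp: eta_comp meas_props[OF circ])

lemma sp_fault: "sp n P (fault_of C u l) = par {..<nmeas C} (\<lambda>j. u j \<and> meas_level C j - 1 = l \<and> sp n P (meas_pauli C j))"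
proof -
  have "sp n P (fault_of C u l) = par (set [0..<nmeas C]) (\<lambda>j. u j \<and> sp n P (eta (meas_level C j - 1) (meas_pauli C j) l))"
    unfolding fault_comp by (rule foldr_par[where f = "sp n P"]) (auto simp: sp_mult_right)
  also have "\<dots> = par {..<nmeas C} (\<lambda>j. u j \<and> meas_level C j - 1 = l \<and> sp n P (meas_pauli C j))"
    unfolding set_upt0 by (rule par_cong) (auto simp: eta_comp)
  finally show ?thesis .
qed

lemma spst_Gop_fault: assumes "1 \<le> l" "l \<le> depth C" "pv_valid n P"
  shows "spst n (depth C) (Gop n C P l) (backcum n C (fault_of C u))
       = par {..<nmeas C} (\<lambda>j. u j \<and> meas_level C j - 1 = l - 1 \<and> sp n P (meas_pauli C j))"
  by (simp add: spst_Gop_backcum[OF circ assms] fault_valid sp_fault)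

lemma sp_Ps_S: assumes j: "j < nmeas C" and j': "j' < nmeas C" and lv: "meas_level C j = meas_level C j'"
  shows "sp n (Ps j) (meas_pauli C j') = (j = j')"
proof (cases "j = j'")
  case True
  then show ?thesis using Ps j by (simp add: commute_sp)
next
  case False
  have "pv_supp (Ps j) \<inter> pv_supp (meas_pauli C j') = {}"
    using meas_disjoint[OF circ j j' False lv] Ps j by blast
  then show ?thesis using False disj_sp by blast
qed

lemma Gop_Ps_fault: assumes j: "j < nmeas C"
  shows "spst n (depth C) (Gop n C (Ps j) (meas_level C j)) (backcum n C (fault_of C u)) = u j"
proof -
  have mp: "1 \<le> meas_level C j" "meas_level C j \<le> depth C" using meas_props[OF circ j] by auto
  have "spst n (depth C) (Gop n C (Ps j) (meas_level C j)) (backcum n C (fault_of C u))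
      = par {..<nmeas C} (\<lambda>j'. u j' \<and> meas_level C j' - 1 = meas_level C j - 1 \<and> sp n (Ps j) (meas_pauli C j'))"
    using spst_Gop_fault[OF mp] Ps j by simp
  also have "\<dots> = (j \<in> {..<nmeas C} \<and> u j \<and> meas_level C j - 1 = meas_level C j - 1 \<and> sp n (Ps j) (meas_pauli C j))"
  proof (rule par_single)
    fix j' assume j': "j' \<in> {..<nmeas C}" and h: "u j' \<and> meas_level C j' - 1 = meas_level C j - 1 \<and> sp n (Ps j) (meas_pauli C j')"
    have "1 \<le> meas_level C j'" using meas_props[OF circ] j' by auto
    then have ee: "meas_level C j = meas_level C j'" using h mp by linarith
    show "j' = j" using sp_Ps_S[OF j _ ee] j' h by auto
  qed simp
  also have "\<dots> = u j" using j sp_Ps_S[OF j j] by simp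
  finally show ?thesis .
qed

lemma Lop_valid: "st_valid n (depth C) (Lop n C Ps v)"
  unfolding Lop_def
proof (rule foldr_closed[where Q = "st_valid n (depth C)"])
  show "\<forall>j\<in>set [0..<nmeas C]. v j \<longrightarrow> st_valid n (depth C) (Gop n C (Ps j) (meas_level C j))"
    using Ps meas_props[OF circ] by (auto intro!: Gop_valid[OF circ])
qed (auto intro: st_valid_mult)

lemma spst_Lop: "spst n (depth C) (Lop n C Ps v) (backcum n C (fault_of C u)) = par {..<nmeas C} (\<lambda>j. v j \<and> u j)"
proof -
  let ?B = "backcum n C (fault_of C u)"
  have "spst n (depth C) (Lop n C Ps v) ?B
      = par (set [0..<nmeas C]) (\<lambda>j. v j \<and> spst n (depth C) (Gop n C (Ps j) (meas_level C j)) ?B)"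
    unfolding Lop_def by (rule foldr_par[where f = "\<lambda>F. spst n (depth C) F ?B"]) (auto simp: spst_mult_left)
  also have "\<dots> = par {..<nmeas C} (\<lambda>j. v j \<and> u j)"
    unfolding set_upt0 by (rule par_cong) (simp add: Gop_Ps_fault)
  finally show ?thesis .
qed

definition prodP :: "(nat \<Rightarrow> bool) \<Rightarrow> pv" where
  "prodP v = foldr (\<lambda>j acc. if v j then pv_mult (Ps j) acc else acc) [0..<nmeas C] pv_one"

lemma prodP_valid: "pv_valid n (prodP v)"
  unfolding prodP_def by (rule foldr_closed[where Q = "pv_valid n"]) (auto intro: pv_valid_mult simp: Ps)

lemma sp_prodP: "sp n (prodP v) S = par {..<nmeas C} (\<lambda>j. v j \<and> sp n (Ps j) S)"
  unfolding prodP_def set_upt0[symmetric] by (rule foldr_par[where f = "\<lambda>x. sp n x S"]) (auto simp: sp_mult_left)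

lemma Lop_Gop: assumes lv: "\<forall>j<nmeas C. v j \<longrightarrow> meas_level C j = l"
  shows "Lop n C Ps v = Gop n C (prodP v) l"
proof -
  have "\<forall>j\<in>set xs. j < nmeas C \<Longrightarrow>
    foldr (\<lambda>j acc. if v j then st_mult (Gop n C (Ps j) (meas_level C j)) acc else acc) xs st_one
    = Gop n C (foldr (\<lambda>j acc. if v j then pv_mult (Ps j) acc else acc) xs pv_one) l
    \<and> pv_valid n (foldr (\<lambda>j acc. if v j then pv_mult (Ps j) acc else acc) xs pv_one)" for xs
  proof (induction xs)
    case Nil
    then show ?case by (simp add: Gop_one[OF circ])
  next
    case (Cons x xs)
    then show ?case using lv Ps by (auto simp: Gop_hom[OF circ] intro: pv_valid_mult)
  qed
  then show ?thesis unfolding Lop_def prodP_def by simp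
qed

end




theorem mainTheorem15:
  fixes n :: nat and C :: "cop list" and Ps :: "nat \<Rightarrow> pv"
    and B1 :: "pv set" and B2 :: "nat \<Rightarrow> pv set" and B3 :: "(nat \<Rightarrow> bool) set"
  assumes circ: "clifford_circuit n C"
    and lin: "linear_code (outcome_code n C)"
    and Ps: "\<forall>j<nmeas C. pv_valid n (Ps j) \<and> pv_supp (Ps j) \<subseteq> pv_supp (meas_pauli C j)
               \<and> \<not> pv_commute n (Ps j) (meas_pauli C j)"
    and B1: "is_basis pv_mult pv_one {p. pv_valid n p} B1"
    and B2: "\<forall>l\<in>{1..depth C}. is_basis pv_mult pv_one (comm_space n C l) (B2 l)"
    and B3: "is_basis bs_xor bs_zero (outcome_code n C) B3"
  shows "gf2_span st_mult st_one
           (eta (depth C) ` B1 \<union> (\<Union>l\<in>{1..depth C}. (\<lambda>P. Gop n C P l) ` B2 l) \<union> Lop n C Ps ` B3)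
         = {F. st_valid n (depth C) F \<and>
              (\<forall>u\<in>bs_perp (nmeas C) (outcome_code n C).
                 st_commute n (depth C) F (backcum n C (fault_of C u)))}"
proof -
  let ?D = "depth C" and ?m = "nmeas C" and ?Oc = "outcome_code n C"
  let ?perp = "bs_perp ?m ?Oc"
  let ?G12 = "eta ?D ` B1 \<union> (\<Union>l\<in>{1..?D}. (\<lambda>P. Gop n C P l) ` B2 l)"
  let ?Gens = "?G12 \<union> Lop n C Ps ` B3"
  define Comm where "Comm = {F. st_valid n ?D F \<and> (\<forall>u\<in>?perp. st_commute n ?D F (backcum n C (fault_of C u)))}"
  have mp: "\<And>j. j < ?m \<Longrightarrow> pv_valid n (meas_pauli C j) \<and> 1 \<le> meas_level C j \<and> meas_level C j \<le> ?D"
    using meas_props[OF circ] by blast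
  have B1V: "B1 \<subseteq> {p. pv_valid n p}" and B1S: "gf2_span pv_mult pv_one B1 = {p. pv_valid n p}"
    using B1 by (auto simp: is_basis_def)
  have B2V: "B2 l \<subseteq> comm_space n C l" and B2S: "gf2_span pv_mult pv_one (B2 l) = comm_space n C l"
    if "l \<in> {1..?D}" for l using B2 that by (auto simp: is_basis_def)
  have B3V: "B3 \<subseteq> ?Oc" and B3S: "gf2_span bs_xor bs_zero B3 = ?Oc"
    using B3 by (auto simp: is_basis_def)
  have OcV: "\<forall>w\<in>?Oc. bs_valid ?m w" by (simp add: outcome_code_def)
  have Oc0: "bs_zero \<in> ?Oc" and Ocx: "\<forall>a\<in>?Oc. \<forall>b\<in>?Oc. bs_xor a b \<in> ?Oc"
    using lin by (auto simp: linear_code_def)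
  have ipc: "par {..<?m} (\<lambda>j. v j \<and> u j) = odd (card {j. j < ?m \<and> u j \<and> v j})" for u v
  proof -
    have "{j\<in>{..<?m}. v j \<and> u j} = {j. j < ?m \<and> u j \<and> v j}" by auto
    then show ?thesis by (simp add: par_def)
  qed
  have perpD: "\<not> par {..<?m} (\<lambda>j. v j \<and> u j)" if "u \<in> ?perp" "v \<in> ?Oc" for u v
    using that ipc by (auto simp: bs_perp_def)

  have Comm_one: "st_one \<in> Comm" by (simp add: Comm_def st_commute_spst)
  have Comm_mult: "st_mult F F' \<in> Comm" if "F \<in> Comm" "F' \<in> Comm" for F F'
    using that by (auto simp: Comm_def st_valid_mult st_commute_spst spst_mult_left)
  have fv: "\<And>u l. pv_valid n (fault_of C u l)" by (rule fault_valid[OF circ Ps])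

  have eta_Comm: "eta ?D P \<in> Comm" if "P \<in> B1" for P
  proof -
    have vP: "pv_valid n P" using that B1V by auto
    have "\<not> spst n ?D (eta ?D P) (backcum n C (fault_of C u))" for u
    proof -
      have "spst n ?D (eta ?D P) (backcum n C (fault_of C u)) = sp n P (fault_of C u ?D)"
        by (rule spst_eta_backcum[OF circ])
      also have "\<dots> = par {..<?m} (\<lambda>j. u j \<and> meas_level C j - 1 = ?D \<and> sp n P (meas_pauli C j))"
        by (rule sp_fault[OF circ Ps])
      also have "\<dots> = par {..<?m} (\<lambda>_. False)"
        by (rule par_cong) (use mp in fastforce)
      finally show ?thesis by simp
    qed
    then show ?thesis using vP by (simp add: Comm_def st_valid_eta st_commute_spst)
  qed
  have Gop_Comm: "Gop n C P l \<in> Comm" if l: "l \<in> {1..?D}" and P: "P \<in> B2 l" for P l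
  proof -
    have cs: "P \<in> comm_space n C l" using B2V[OF l] P by auto
    then have vP: "pv_valid n P" by (simp add: comm_space_def)
    have l1: "1 \<le> l" "l \<le> ?D" using l by auto
    have "\<not> spst n ?D (Gop n C P l) (backcum n C (fault_of C u))" for u
    proof -
      have "spst n ?D (Gop n C P l) (backcum n C (fault_of C u))
          = par {..<?m} (\<lambda>j. u j \<and> meas_level C j - 1 = l - 1 \<and> sp n P (meas_pauli C j))"
        by (rule spst_Gop_fault[OF circ Ps l1 vP])
      also have "\<dots> = par {..<?m} (\<lambda>_. False)"
      proof (rule par_cong)
        fix j assume j: "j \<in> {..<?m}"
        have "meas_level C j - 1 = l - 1 \<Longrightarrow> meas_level C j = l" using mp[of j] j l1 by auto
        then show "(u j \<and> meas_level C j - 1 = l - 1 \<and> sp n P (meas_pauli C j)) = False"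
          using cs j by (auto simp: comm_space_def commute_sp)
      qed
      finally show ?thesis by simp
    qed
    then show ?thesis using Gop_valid[OF circ vP l1] by (simp add: Comm_def st_commute_spst)
  qed
  have Lop_Comm: "Lop n C Ps v \<in> Comm" if "v \<in> B3" for v
  proof -
    have vO: "v \<in> ?Oc" using that B3V by auto
    show ?thesis using Lop_valid[OF circ Ps] spst_Lop[OF circ Ps] perpD[OF _ vO]
      by (simp add: Comm_def st_commute_spst)
  qed
  have gen_Comm: "x \<in> Comm" if "x \<in> ?Gens" for x
    using that eta_Comm Gop_Comm Lop_Comm by blast
  have sub: "x \<in> Comm" if "x \<in> gf2_span st_mult st_one ?Gens" for x
    using that
  proof (induction rule: gf2_span.induct)
    case span_one
    then show ?case by (rule Comm_one)
  next
    case (span_step a b)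
    then show ?case using gen_Comm Comm_mult by blast
  qed

  define Sp12 where "Sp12 = gf2_span st_mult st_one ?G12"
  have Sp12_sub: "Sp12 \<subseteq> gf2_span st_mult st_one ?Gens"
  proof
    fix x assume "x \<in> Sp12"
    then show "x \<in> gf2_span st_mult st_one ?Gens" unfolding Sp12_def by (rule span_mono[rotated]) auto
  qed
  have Sp12_mult: "st_mult x y \<in> Sp12" if "x \<in> Sp12" "y \<in> Sp12" for x y
    using that unfolding Sp12_def by (intro span_mult) (auto simp: st_mult_assoc)
  define T where "T = {F. \<exists>v. st_mult F (Lop n C Ps v) \<in> Sp12}"
  have T_mult: "st_mult F F' \<in> T" if FT: "F \<in> T" and F'T: "F' \<in> T" for F F'
  proof -
    obtain v where v: "st_mult F (Lop n C Ps v) \<in> Sp12" using FT unfolding T_def by blast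
    obtain v' where v': "st_mult F' (Lop n C Ps v') \<in> Sp12" using F'T unfolding T_def by blast
    have "st_mult (st_mult F F') (Lop n C Ps (bs_xor v v'))
        = st_mult (st_mult F (Lop n C Ps v)) (st_mult F' (Lop n C Ps v'))"
      by (simp add: Lop_hom st_mult_assoc st_mult_lc)
    then have "st_mult (st_mult F F') (Lop n C Ps (bs_xor v v')) \<in> Sp12" using Sp12_mult[OF v v'] by simp
    then show ?thesis unfolding T_def by blast
  qed
  have T_eta: "eta ?D Q \<in> T" if vQ: "pv_valid n Q" for Q
  proof -
    have "Q \<in> gf2_span pv_mult pv_one B1" using B1S vQ by simp
    then have "eta ?D Q \<in> gf2_span st_mult st_one (eta ?D ` B1)"
      using span_hom[of Q pv_mult pv_one B1 "{p. pv_valid n p}" "eta ?D" st_mult st_one] B1V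
      by (auto intro: pv_valid_mult simp: eta_hom eta_one)
    then have "eta ?D Q \<in> Sp12" unfolding Sp12_def by (rule span_mono[rotated]) auto
    then show ?thesis unfolding T_def by (intro CollectI exI[of _ bs_zero]) (simp add: Lop_zero)
  qed
  have T_Gop: "Gop n C P l \<in> T" if vP: "pv_valid n P" and l: "1 \<le> l" "l \<le> ?D" for P l
  proof -
    define v where "v = (\<lambda>j. j < ?m \<and> meas_level C j = l \<and> sp n P (meas_pauli C j))"
    have lv: "\<forall>j<?m. v j \<longrightarrow> meas_level C j = l" by (simp add: v_def)
    have pv: "pv_valid n (prodP C Ps v)" by (rule prodP_valid[OF circ Ps])
    let ?P' = "pv_mult P (prodP C Ps v)"
    have "st_mult (Gop n C P l) (Lop n C Ps v) = Gop n C ?P' l"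
      using Lop_Gop[OF circ Ps lv] Gop_hom[OF circ vP pv] by simp
    moreover have "?P' \<in> comm_space n C l"
      unfolding comm_space_def
    proof (intro CollectI conjI allI impI)
      show "pv_valid n ?P'" using vP pv by (rule pv_valid_mult)
      fix j assume j: "j < ?m" and jl: "meas_level C j = l"
      have "sp n (prodP C Ps v) (meas_pauli C j) = par {..<?m} (\<lambda>j'. v j' \<and> sp n (Ps j') (meas_pauli C j))"
        by (rule sp_prodP[OF circ Ps])
      also have "\<dots> = (j \<in> {..<?m} \<and> v j \<and> sp n (Ps j) (meas_pauli C j))"
      proof (rule par_single)
        fix j' assume j': "j' \<in> {..<?m}" and h: "v j' \<and> sp n (Ps j') (meas_pauli C j)"
        then have "meas_level C j' = meas_level C j" using jl by (simp add: v_def)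
        then show "j' = j" using sp_Ps_S[OF circ Ps _ j] j' h by auto
      qed simp
      also have "\<dots> = sp n P (meas_pauli C j)" using j jl sp_Ps_S[OF circ Ps j j] by (simp add: v_def)
      finally show "pv_commute n ?P' (meas_pauli C j)" by (simp add: commute_sp sp_mult_left)
    qed
    then have "?P' \<in> gf2_span pv_mult pv_one (B2 l)" using B2S[of l] l by simp
    then have "Gop n C ?P' l \<in> gf2_span st_mult st_one ((\<lambda>P. Gop n C P l) ` B2 l)"
      using span_hom[of ?P' pv_mult pv_one "B2 l" "{p. pv_valid n p}" "\<lambda>P. Gop n C P l" st_mult st_one] B2V[of l] l
      by (auto intro: pv_valid_mult simp: Gop_hom[OF circ] Gop_one[OF circ] comm_space_def)
    then have "Gop n C ?P' l \<in> Sp12" unfolding Sp12_def by (rule span_mono[rotated]) (use l in auto)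
    ultimately have "st_mult (Gop n C P l) (Lop n C Ps v) \<in> Sp12" by simp
    then show ?thesis unfolding T_def by blast
  qed
  have down: "\<forall>F. st_valid n ?D F \<and> (\<forall>l < ?D - k. F l = pv_one) \<longrightarrow> F \<in> T" for k
  proof (induction k)
    case 0
    show ?case
    proof (intro allI impI)
      fix F assume h: "st_valid n ?D F \<and> (\<forall>l < ?D - 0. F l = pv_one)"
      have "F = eta ?D (F ?D)"
      proof
        fix l show "F l = eta ?D (F ?D) l"
          using h by (cases "l < ?D"; cases "l = ?D") (auto simp: eta_comp st_valid_def)
      qed
      moreover have "pv_valid n (F ?D)" using h by (simp add: st_valid_def)
      ultimately show "F \<in> T" using T_eta by metis
    qed
  next
    case (Suc k)
    show ?case
    proof (intro allI impI)
      fix F assume h: "st_valid n ?D F \<and> (\<forall>l < ?D - Suc k. F l = pv_one)"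
      show "F \<in> T"
      proof (cases "k < ?D")
        case False
        then have "?D - Suc k = ?D - k" by simp
        then show ?thesis using Suc.IH h by auto
      next
        case True
        define a where "a = ?D - Suc k"
        have a1: "Suc a = ?D - k" "a < ?D" using True by (auto simp: a_def)
        have va: "pv_valid n (F a)" using h by (simp add: st_valid_def)
        let ?g = "Gop n C (F a) (Suc a)"
        have gv: "st_valid n ?D ?g" using Gop_valid[OF circ va, of "Suc a"] a1 by simp
        have "st_mult F ?g \<in> T"
        proof -
          have "\<forall>l < ?D - k. st_mult F ?g l = pv_one"
          proof (intro allI impI)
            fix l assume "l < ?D - k"
            then have "l \<le> a" using a1 by simp
            then show "st_mult F ?g l = pv_one"
              using h by (cases "l = a") (auto simp: st_mult_def Gop_def eta_comp a_def pv_mult_self)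
          qed
          then show ?thesis using Suc.IH h gv st_valid_mult by blast
        qed
        moreover have "?g \<in> T" using T_Gop[OF va, of "Suc a"] a1 by simp
        ultimately have "st_mult (st_mult F ?g) ?g \<in> T" by (rule T_mult)
        then show ?thesis by (simp add: st_mult_assoc st_mult_self)
      qed
    qed
  qed
  have sup: "F \<in> gf2_span st_mult st_one ?Gens" if F: "F \<in> Comm" for F
  proof -
    have "F \<in> T" using down[of ?D] F by (auto simp: Comm_def)
    then obtain v0 where X0: "st_mult F (Lop n C Ps v0) \<in> Sp12" by (auto simp: T_def)
    define v where "v = (\<lambda>j. v0 j \<and> j < ?m)"
    have Lv: "Lop n C Ps v0 = Lop n C Ps v" unfolding v_def by (rule Lop_restrict)
    define X where "X = st_mult F (Lop n C Ps v)"
    have X: "X \<in> Sp12" using X0 Lv by (simp add: X_def)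
    have XC: "X \<in> Comm" using X Sp12_sub sub by blast
    have "Lop n C Ps v = st_mult F X" by (simp add: X_def st_mult_assoc[symmetric] st_mult_self)
    then have LC: "Lop n C Ps v \<in> Comm" using Comm_mult[OF F XC] by simp
    have vv: "bs_valid ?m v" by (simp add: v_def bs_valid_def)
    have "v \<in> ?Oc"
    proof (rule ccontr)
      assume "v \<notin> ?Oc"
      from perp_perp_aux[of ?Oc ?m v] OcV Oc0 Ocx vv this
      obtain u where u: "bs_valid ?m u" "\<forall>w\<in>?Oc. \<not> ip ?m u w" "ip ?m u v" by blast
      have "u \<in> ?perp"
      proof -
        have "even (card {j. j < ?m \<and> u j \<and> w j})" if "w \<in> ?Oc" for w
        proof -
          have "{j. j < ?m \<and> u j \<and> w j} = {j\<in>{..<?m}. u j \<and> w j}" by auto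
          then show ?thesis using u(2) that by (simp add: ip_def par_def)
        qed
        then show ?thesis using u(1) by (simp add: bs_perp_def)
      qed
      then have "\<not> spst n ?D (Lop n C Ps v) (backcum n C (fault_of C u))"
        using LC by (simp add: Comm_def st_commute_spst)
      then have "\<not> par {..<?m} (\<lambda>j. v j \<and> u j)" by (simp add: spst_Lop[OF circ Ps])
      moreover have "par {..<?m} (\<lambda>j. v j \<and> u j) = ip ?m u v"
        unfolding ip_def by (rule par_cong) auto
      ultimately show False using u(3) by simp
    qed
    then have "v \<in> gf2_span bs_xor bs_zero B3" using B3S by simp
    then have "Lop n C Ps v \<in> gf2_span st_mult st_one (Lop n C Ps ` B3)"
      using span_hom[of v bs_xor bs_zero B3 UNIV "Lop n C Ps" st_mult st_one]
      by (auto simp: Lop_hom Lop_zero)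
    then have L: "Lop n C Ps v \<in> gf2_span st_mult st_one ?Gens" by (rule span_mono[rotated]) auto
    have "F = st_mult X (Lop n C Ps v)" by (simp add: X_def st_mult_assoc st_mult_self)
    then show ?thesis using span_mult[of st_mult st_one X "?Gens" "Lop n C Ps v"] Sp12_sub X L
      by (auto simp: st_mult_assoc)
  qed
  have "gf2_span st_mult st_one ?Gens = Comm" using sub sup by blast
  then show ?thesis by (simp add: Comm_def)
qed


end
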